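(* Assume there exists a sequence $u_r>0$ ($r\ge0$) with $\sum_{r\ge1}u_r^{-1}<\infty$ and $\sum_{r\ge1}p_rN_{r-1}u_{r-1}u_r<\infty$. Then for every $\omega\in\mathbb R^X$ and every $x\in X$, the spectral measure $\mu_x^\omega$ of $H_\omega=\Delta+V_\omega$ and $\delta_x$ satisfies $$\int_{\mathbb R}\frac{d\mu_x^\omega(\lambda)}{(e-\lambda)^2}<\infty\quad\text{for Lebesgue-a.e. } e\in\mathbb R.$$
   Context: $(X,\mathbf P,\mathbf n)$ is a hierarchical structure: $X$ infinite countable, $\mathbf n=(n_r)_{r\ge0}$ positive integers, $\mathcal P_r$ partitions of $X$ ("clusters of rank $r$") with $n_0=1$ and rank-0 clusters singletons, every rank-$r$ cluster ($r\ge1$) a disjoint union of exactly $n_r$ rank-$(r-1)$ clusters, and any two points in a common cluster of some rank. $N_r=\prod_{s=0}^rn_s$, $Q_r(x)$ is the rank-$r$ cluster containing $x$, $d(x,y)=\min\{r:y\in Q_r(x)\}$, $(E_r\psi)(x)=\frac1{N_r}\sum_{d(x,y)\le r}\psi(y)$; $(p_r)_{r\ge1}$ positive with $\sum p_r=1$, $p_0=0$, $\Delta=\sum_{r\ge0}p_rE_r$ on $\ell^2(X)$. For $\omega\in\mathbb R^X$, $V_\omega$ is the self-adjoint multiplication operator by $\omega(x)$ and $H_\omega=\Delta+V_\omega$. $\mu_x^\omega$ is the Borel probability measure with $\langle\delta_x,f(H_\omega)\delta_x\rangle=\int f\,d\mu_x^\omega$ for bounded Borel $f$. *)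

theory Defs
  imports "HOL-Probability.Probability" "HOL-Library.Disjoint_Sets"
begin

definition hierarchical_structure :: "(nat \<Rightarrow> 'x set set) \<Rightarrow> (nat \<Rightarrow> nat) \<Rightarrow> bool" where
  "hierarchical_structure P n \<longleftrightarrow>
     infinite (UNIV :: 'x set) \<and>
     (\<forall>r. n r > 0) \<and> n 0 = 1 \<and>
     (\<forall>r. partition_on (UNIV :: 'x set) (P r)) \<and>
     P 0 = {{x} | x. True} \<and>
     (\<forall>r\<ge>1. \<forall>C\<in>P r. \<exists>S\<subseteq>P (r - 1). card S = n r \<and> C = \<Union>S) \<and>
     (\<forall>x y. \<exists>r. \<exists>C\<in>P r. x \<in> C \<and> y \<in> C)"

definition cluster :: "(nat \<Rightarrow> 'x set set) \<Rightarrow> nat \<Rightarrow> 'x \<Rightarrow> 'x set" where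
  "cluster P r x = (THE C. C \<in> P r \<and> x \<in> C)"

definition NN :: "(nat \<Rightarrow> nat) \<Rightarrow> nat \<Rightarrow> nat" where
  "NN n r = (\<Prod>s\<le>r. n s)"

definition hdist :: "(nat \<Rightarrow> 'x set set) \<Rightarrow> 'x \<Rightarrow> 'x \<Rightarrow> nat" where
  "hdist P x y = (LEAST r. y \<in> cluster P r x)"

definition Eop :: "(nat \<Rightarrow> 'x set set) \<Rightarrow> (nat \<Rightarrow> nat) \<Rightarrow> nat \<Rightarrow> ('x \<Rightarrow> complex) \<Rightarrow> 'x \<Rightarrow> complex" where
  "Eop P n r \<psi> x = (1 / of_nat (NN n r)) * (\<Sum>y\<in>{y. hdist P x y \<le> r}. \<psi> y)"

definition Lap :: "(nat \<Rightarrow> 'x set set) \<Rightarrow> (nat \<Rightarrow> nat) \<Rightarrow> (nat \<Rightarrow> real) \<Rightarrow> ('x \<Rightarrow> complex) \<Rightarrow> 'x \<Rightarrow> complex" where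
  "Lap P n p \<psi> x = (\<Sum>r. complex_of_real (p r) * Eop P n r \<psi> x)"

definition weights_ok :: "(nat \<Rightarrow> real) \<Rightarrow> bool" where
  "weights_ok p \<longleftrightarrow> p 0 = 0 \<and> (\<forall>r\<ge>1. p r > 0) \<and> p sums 1"

definition l2 :: "('x \<Rightarrow> complex) \<Rightarrow> bool" where
  "l2 \<psi> \<longleftrightarrow> (\<lambda>x. (cmod (\<psi> x))\<^sup>2) summable_on UNIV"

text \<open>Domain of the self-adjoint operator H_omega = Delta + V_omega (Delta is bounded).\<close>
definition Hdom :: "('x \<Rightarrow> real) \<Rightarrow> ('x \<Rightarrow> complex) \<Rightarrow> bool" where
  "Hdom \<omega> \<psi> \<longleftrightarrow> l2 \<psi> \<and> l2 (\<lambda>x. complex_of_real (\<omega> x) * \<psi> x)"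

definition Hop :: "(nat \<Rightarrow> 'x set set) \<Rightarrow> (nat \<Rightarrow> nat) \<Rightarrow> (nat \<Rightarrow> real) \<Rightarrow> ('x \<Rightarrow> real) \<Rightarrow> ('x \<Rightarrow> complex) \<Rightarrow> 'x \<Rightarrow> complex" where
  "Hop P n p \<omega> \<psi> x = Lap P n p \<psi> x + complex_of_real (\<omega> x) * \<psi> x"

text \<open>mu is the spectral measure of H_omega and delta_x: a Borel probability measure on R with
  <delta_x, f(H) delta_x> = integral f dmu, here for the resolvent functions f(l) = 1/(l - z),
  Im z /= 0, which determine mu uniquely (Stieltjes inversion).  (H - z)^(-1) delta_x is the
  unique phi in the domain with (H - z) phi = delta_x.\<close>
definition spectral_measure ::
  "(nat \<Rightarrow> 'x set set) \<Rightarrow> (nat \<Rightarrow> nat) \<Rightarrow> (nat \<Rightarrow> real) \<Rightarrow> ('x \<Rightarrow> real) \<Rightarrow> 'x \<Rightarrow> real measure \<Rightarrow> bool" where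
  "spectral_measure P n p \<omega> x \<mu> \<longleftrightarrow>
     prob_space \<mu> \<and> sets \<mu> = sets borel \<and>
     (\<forall>z. Im z \<noteq> 0 \<longrightarrow>
        (\<exists>\<phi>. Hdom \<omega> \<phi> \<and>
              (\<forall>y. Hop P n p \<omega> \<phi> y - z * \<phi> y = (if y = x then 1 else 0)) \<and>
              \<phi> x = (\<integral>l. 1 / (complex_of_real l - z) \<partial>\<mu>)))"

end

theory Submission
  imports Defs "HOL-Probability.Probability"
begin


locale hs =
  fixes P :: "nat \<Rightarrow> 'x set set" and n :: "nat \<Rightarrow> nat"
  assumes hs: "hierarchical_structure P n"
begin

abbreviation Q where "Q \<equiv> cluster P"

lemma part: "partition_on UNIV (P r)"
  using hs unfolding hierarchical_structure_def by (elim conjE) (erule allE)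

lemma npos: "n r > 0"
  using hs unfolding hierarchical_structure_def by (elim conjE) (erule allE)

lemma n0: "n 0 = 1"
  using hs unfolding hierarchical_structure_def by (elim conjE)

lemma P0: "P 0 = {{x} | x. True}"
  using hs unfolding hierarchical_structure_def by (elim conjE)

lemma Psuc: "C \<in> P (Suc r) \<Longrightarrow> \<exists>S\<subseteq>P r. card S = n (Suc r) \<and> C = \<Union>S"
proof -
  assume C: "C \<in> P (Suc r)"
  have "\<forall>r\<ge>1. \<forall>C\<in>P r. \<exists>S\<subseteq>P (r - 1). card S = n r \<and> C = \<Union>S"
    using hs unfolding hierarchical_structure_def by (elim conjE)
  from this[rule_format, of "Suc r" C] C show ?thesis by simp
qed

lemma common: "\<exists>r. \<exists>C\<in>P r. x \<in> C \<and> y \<in> C"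
  using hs unfolding hierarchical_structure_def by (elim conjE) (erule allE)+

lemma ex1: "\<exists>!C. C \<in> P r \<and> y \<in> C"
proof -
  have "\<Union>(P r) = UNIV" "disjoint (P r)" using part[of r] unfolding partition_on_def by auto
  then obtain C where C: "C \<in> P r" "y \<in> C" by blast
  show ?thesis
  proof (rule ex1I[of _ C])
    show "C \<in> P r \<and> y \<in> C" using C by blast
  next
    fix D assume D: "D \<in> P r \<and> y \<in> D"
    show "D = C"
    proof (rule ccontr)
      assume "D \<noteq> C"
      then have "D \<inter> C = {}" using \<open>disjoint (P r)\<close> C D by (meson disjointD)
      then show False using C D by blast
    qed
  qed
qed

lemma Q_in: "Q r y \<in> P r" and Q_mem: "y \<in> Q r y"
  using theI'[OF ex1[of r y]] unfolding cluster_def by auto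

lemma Q_eq: "C \<in> P r \<Longrightarrow> y \<in> C \<Longrightarrow> Q r y = C"
  using ex1[of r y] Q_in Q_mem by blast

lemma Q_same: "y' \<in> Q r y \<Longrightarrow> Q r y' = Q r y"
  using Q_eq Q_in by blast

lemma Q_sym: "y' \<in> Q r y \<longleftrightarrow> y \<in> Q r y'"
  using Q_same Q_mem by metis

lemma Q_Suc: "Q r y \<subseteq> Q (Suc r) y"
proof -
  obtain S where S: "S \<subseteq> P r" "Q (Suc r) y = \<Union>S" using Psuc[OF Q_in[of "Suc r" y]] by auto
  have "y \<in> \<Union>S" using S(2) Q_mem by metis
  then obtain D where D: "D \<in> S" "y \<in> D" by (rule UnionE)
  have "D = Q r y" using Q_eq[of D r y] D S(1) by auto
  then show ?thesis using S(2) D(1) by auto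
qed

lemma Q_mono: "r \<le> s \<Longrightarrow> Q r y \<subseteq> Q s y"
proof (induction s rule: dec_induct)
  case (step m)
  show ?case by (rule order_trans[OF step.IH Q_Suc])
qed simp

lemma NN_Suc: "NN n (Suc r) = NN n r * n (Suc r)"
  unfolding NN_def by simp

lemma NN_pos: "NN n r > 0"
  unfolding NN_def using npos by (simp add: prod_pos)

lemma NN_mono: "r \<le> s \<Longrightarrow> NN n r \<le> NN n s"
proof (induction s rule: dec_induct)
  case (step m)
  have h: "NN n m \<le> NN n m * n (Suc m)" using npos[of "Suc m"] by simp
  show ?case unfolding NN_Suc using step.IH h by (rule order_trans)
qed simp

lemma Q_card: "finite (Q r y) \<and> card (Q r y) = NN n r"
proof (induction r arbitrary: y)
  case 0
  have "Q 0 y = {y}" using Q_eq[of "{y}" 0 y] P0 by auto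
  then show ?case using n0 by (simp add: NN_def)
next
  case (Suc r)
  obtain S where S: "S \<subseteq> P r" "card S = n (Suc r)" "Q (Suc r) y = \<Union>S" using Psuc[OF Q_in] by blast
  have "card S > 0" using S(2) npos[of "Suc r"] by simp
  then have finS: "finite S" by (rule card_ge_0_finite)
  have D: "finite D \<and> card D = NN n r" if "D \<in> S" for D
  proof -
    have "D \<in> P r" using that S by auto
    moreover have "D \<noteq> {}" using part[of r] \<open>D \<in> P r\<close> unfolding partition_on_def by auto
    then obtain d where "d \<in> D" by auto
    ultimately have "D = Q r d" using Q_eq by auto
    then show ?thesis using Suc by auto
  qed
  have disj: "disjoint S" using part[of r] S(1) unfolding partition_on_def
    by (meson pairwise_subset)
  have "card (\<Union>S) = (\<Sum>D\<in>S. card D)"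
    by (rule card_Union_disjoint[OF disj]) (use D in auto)
  also have "\<dots> = NN n r * n (Suc r)" using D S(2) by simp
  finally show ?case using S(3) NN_Suc finS D by auto
qed

lemma Q_finite: "finite (Q r y)" using Q_card by auto

lemma hdist_le: "hdist P y y' \<le> r \<longleftrightarrow> y' \<in> Q r y"
proof -
  obtain r0 C where "C \<in> P r0" "y \<in> C" "y' \<in> C" using common by blast
  then have ex: "y' \<in> Q r0 y" using Q_eq by auto
  show ?thesis
  proof
    assume "hdist P y y' \<le> r"
    moreover have "y' \<in> Q (hdist P y y') y" unfolding hdist_def by (rule LeastI[of _ r0], rule ex)
    ultimately show "y' \<in> Q r y" using Q_mono by blast
  next
    assume "y' \<in> Q r y" then show "hdist P y y' \<le> r" unfolding hdist_def by (rule Least_le)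
  qed
qed

lemma Eop_eq: "Eop P n r f y = (1 / of_nat (NN n r)) * (\<Sum>y'\<in>Q r y. f y')"
proof -
  have "{y'. hdist P y y' \<le> r} = Q r y" using hdist_le by blast
  then show ?thesis unfolding Eop_def by simp
qed

end


definition ip :: "'a set \<Rightarrow> ('a \<Rightarrow> real) \<Rightarrow> ('a \<Rightarrow> real) \<Rightarrow> real" where
  "ip C f g = (\<Sum>y\<in>C. f y * g y)"

definition Aop :: "('a \<Rightarrow> 'a \<Rightarrow> real) \<Rightarrow> 'a set \<Rightarrow> ('a \<Rightarrow> real) \<Rightarrow> 'a \<Rightarrow> real" where
  "Aop a C f = (\<lambda>y. if y \<in> C then (\<Sum>y'\<in>C. a y y' * f y') else 0)"

definition supp_in :: "'a set \<Rightarrow> ('a \<Rightarrow> 'b::zero) \<Rightarrow> bool" where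
  "supp_in C f \<longleftrightarrow> (\<forall>y. y \<notin> C \<longrightarrow> f y = 0)"

lemma ip_sym: "ip C f g = ip C g f"
  unfolding ip_def by (simp add: mult.commute)

lemma ip_add_right: "ip C f (\<lambda>y. g y + s * h y) = ip C f g + s * ip C f h"
  unfolding ip_def by (simp add: algebra_simps sum.distrib sum_distrib_left)

lemma ip_add_left: "ip C (\<lambda>y. g y + s * h y) f = ip C g f + s * ip C h f"
  unfolding ip_def by (simp add: algebra_simps sum.distrib sum_distrib_left)

lemma ip_diff_right: "ip C f (\<lambda>y. g y - s * h y) = ip C f g - s * ip C f h"
  unfolding ip_def by (simp add: algebra_simps sum_subtractf sum_distrib_left)

lemma ip_diff_left: "ip C (\<lambda>y. g y - s * h y) f = ip C g f - s * ip C h f"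
  unfolding ip_def by (simp add: algebra_simps sum_subtractf sum_distrib_left)

lemma ip_scale_left: "ip C (\<lambda>y. s * g y) f = s * ip C g f"
  unfolding ip_def by (simp add: algebra_simps sum_distrib_left)

lemma ip_scale_right: "ip C f (\<lambda>y. s * g y) = s * ip C f g"
  unfolding ip_def by (simp add: algebra_simps sum_distrib_left)

lemma ip_nonneg: "ip C f f \<ge> 0"
  unfolding ip_def by (simp add: sum_nonneg)

lemma ip_zero:
  assumes "finite C" "ip C f f = 0" "y \<in> C"
  shows "f y = 0"
proof -
  have "(\<Sum>y\<in>C. f y * f y) = 0" using assms(2) unfolding ip_def .
  then have "\<forall>y\<in>C. f y * f y = 0" using assms(1) by (subst (asm) sum_nonneg_eq_0_iff) auto
  then show ?thesis using assms(3) by simp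
qed

lemma ip_single_le:
  assumes "finite C" "y \<in> C"
  shows "f y * f y \<le> ip C f f"
  unfolding ip_def by (rule member_le_sum) (use assms in auto)

lemma Aop_sym:
  assumes symm: "\<forall>y\<in>C. \<forall>y'\<in>C. a y y' = a y' y"
  shows "ip C f (Aop a C g) = ip C (Aop a C f) g"
proof -
  have "ip C f (Aop a C g) = (\<Sum>y\<in>C. \<Sum>y'\<in>C. f y * a y y' * g y')"
    unfolding ip_def Aop_def by (simp add: sum_distrib_left mult.assoc)
  also have "\<dots> = (\<Sum>y'\<in>C. \<Sum>y\<in>C. f y * a y y' * g y')"
    by (rule sum.swap)
  also have "\<dots> = (\<Sum>y'\<in>C. \<Sum>y\<in>C. a y' y * f y * g y')"
    by (intro sum.cong refl) (use symm in auto)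
  also have "\<dots> = ip C (Aop a C f) g"
    unfolding ip_def Aop_def by (simp add: sum_distrib_right)
  finally show ?thesis .
qed

lemma Aop_lin: "Aop a C (\<lambda>y. f y + s * h y) = (\<lambda>y. Aop a C f y + s * Aop a C h y)"
  unfolding Aop_def by (auto simp: algebra_simps sum.distrib sum_distrib_left)

lemma Aop_scale: "Aop a C (\<lambda>y. c * f y) = (\<lambda>y. c * Aop a C f y)"
  unfolding Aop_def by (auto simp: algebra_simps sum_distrib_left)

lemma Aop_supp: "supp_in C (Aop a C f)"
  unfolding Aop_def supp_in_def by auto

lemma quad_zero:
  fixes b D :: real
  assumes "\<forall>s. 2 * s * b \<le> s^2 * D"
  shows "b = 0"
proof (cases "D \<le> 0")
  case True
  have "2*b*b \<le> b^2 * D" using assms[rule_format, of b] by simp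
  also have "\<dots> \<le> 0" using True by (simp add: mult_nonneg_nonpos)
  finally have "b*b \<le> 0" by simp
  then have "b*b = 0" using zero_le_square[of b] by linarith
  then show ?thesis by simp
next
  case False
  then have D: "D > 0" by simp
  have "2*(b/D)*b \<le> (b/D)^2 * D" using assms[rule_format, of "b/D"] by simp
  also have "\<dots> = b*b/D" using D by (simp add: power2_eq_square)
  finally have "2*(b*b/D) \<le> b*b/D" by simp
  then have "b*b/D \<le> 0" by simp
  then have "b*b \<le> 0" using D by (simp add: divide_le_0_iff)
  then have "b*b = 0" using zero_le_square[of b] by linarith
  then show ?thesis by simp
qed

lemma cont_coord [continuous_intros]: "continuous_on S (\<lambda>f. f y :: real)"
  by (rule continuous_on_subset[OF continuous_on_product_coordinates]) simp

lemma compact_box: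
  "compact {f :: 'a \<Rightarrow> real. \<forall>y. f y \<in> (if y \<in> C then {-1..1} else {0})}"
proof -
  let ?B = "\<lambda>y. (if y \<in> C then {-1..1::real} else {0})"
  have "compactin (product_topology (\<lambda>i. euclidean) UNIV) (PiE UNIV ?B)"
    by (subst compactin_PiE) auto
  then have "compact (PiE UNIV ?B)"
    by (simp add: euclidean_product_topology)
  moreover have "PiE UNIV ?B = {f. \<forall>y. f y \<in> ?B y}"
    unfolding PiE_UNIV_domain Pi_def by auto
  ultimately show ?thesis by simp
qed

lemma eig_in_W:
  fixes C :: "'a set" and a :: "'a \<Rightarrow> 'a \<Rightarrow> real"
  assumes finC: "finite C"
    and symm: "\<forall>y\<in>C. \<forall>y'\<in>C. a y y' = a y' y"
    and vk: "\<forall>k<K. supp_in C (v k) \<and> (\<forall>y\<in>C. (\<Sum>y'\<in>C. a y y' * v k y') = lam k * v k y)"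
    and Wdef: "W = {f. supp_in C f \<and> (\<forall>k<K. ip C (v k) f = 0)}"
    and g: "g \<in> W" "g y0 \<noteq> 0"
  shows "\<exists>u l. u \<in> W \<and> ip C u u = 1 \<and> (\<forall>y\<in>C. (\<Sum>y'\<in>C. a y y' * u y') = l * u y)"
proof -
  have Wlin: "(\<lambda>y. f y + s * h y) \<in> W" if "f \<in> W" "h \<in> W" for f h s
    using that unfolding Wdef supp_in_def by (auto simp: ip_add_right)
  have Wscale: "(\<lambda>y. s * h y) \<in> W" if "h \<in> W" for h s
    using that unfolding Wdef supp_in_def by (auto simp: ip_scale_right)
  have Wdiff: "(\<lambda>y. f y - s * h y) \<in> W" if "f \<in> W" "h \<in> W" for f h s
    using Wlin[OF that, of "-s"] by simp
  have Av: "Aop a C (v k) y = lam k * v k y" if "k < K" for k y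
    using vk that unfolding Aop_def supp_in_def by auto
  have Winv: "Aop a C f \<in> W" if "f \<in> W" for f
  proof -
    have "ip C (v k) (Aop a C f) = 0" if "k < K" for k
    proof -
      have e: "Aop a C (v k) = (\<lambda>y. lam k * v k y)" by (intro ext) (rule Av[OF that])
      have "ip C (v k) (Aop a C f) = ip C (Aop a C (v k)) f" by (rule Aop_sym[OF symm])
      also have "\<dots> = lam k * ip C (v k) f" unfolding e by (rule ip_scale_left)
      also have "\<dots> = 0" using \<open>f \<in> W\<close> that unfolding Wdef by simp
      finally show ?thesis .
    qed
    then show ?thesis unfolding Wdef using Aop_supp by auto
  qed
  define S where "S = {f \<in> W. ip C f f = 1}"
  define q where "q f = ip C f (Aop a C f)" for f
  have Wsupp: "f y = 0" if "f \<in> W" "y \<notin> C" for f y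
    using that unfolding Wdef supp_in_def by auto
  have Sbox: "S \<subseteq> {f. \<forall>y. f y \<in> (if y \<in> C then {-1..1} else {0})}"
  proof
    fix f assume "f \<in> S"
    then have fW: "f \<in> W" and f1: "ip C f f = 1" unfolding S_def by auto
    have "f y \<in> (if y \<in> C then {-1..1} else {0})" for y
    proof (cases "y \<in> C")
      case True
      have "f y * f y \<le> 1" using ip_single_le[OF finC True, of f] f1 by simp
      then have "\<bar>f y\<bar> \<le> 1" by (metis abs_le_square_iff abs_one mult_1 power2_eq_square)
      then show ?thesis using True by auto
    next
      case False then show ?thesis using Wsupp[OF fW] by auto
    qed
    then show "f \<in> {f. \<forall>y. f y \<in> (if y \<in> C then {-1..1} else {0})}" by auto
  qed
  have closedS: "closed S"
  proof -
    have c1: "closed {f :: 'a \<Rightarrow> real. \<forall>y. y \<notin> C \<longrightarrow> f y = 0}"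
    proof (intro closed_Collect_all closed_Collect_imp)
      fix y show "open {f :: 'a \<Rightarrow> real. y \<notin> C}" by (cases "y \<in> C") auto
      show "closed {f :: 'a \<Rightarrow> real. f y = 0}"
        by (rule closed_Collect_eq) (rule cont_coord, rule continuous_on_const)
    qed
    have c2: "closed {f :: 'a \<Rightarrow> real. \<forall>k. k < K \<longrightarrow> ip C (v k) f = 0}"
    proof (intro closed_Collect_all closed_Collect_imp)
      fix k show "open {f :: 'a \<Rightarrow> real. k < K}" by (cases "k < K") auto
      show "closed {f :: 'a \<Rightarrow> real. ip C (v k) f = 0}"
        unfolding ip_def
        by (rule closed_Collect_eq) (intro continuous_on_sum continuous_on_mult continuous_on_const cont_coord, rule continuous_on_const)
    qed
    have c3: "closed {f :: 'a \<Rightarrow> real. ip C f f = 1}"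
      unfolding ip_def
      by (rule closed_Collect_eq) (intro continuous_on_sum continuous_on_mult cont_coord, rule continuous_on_const)
    have "S = {f :: 'a \<Rightarrow> real. \<forall>y. y \<notin> C \<longrightarrow> f y = 0} \<inter> {f. \<forall>k. k < K \<longrightarrow> ip C (v k) f = 0} \<inter> {f. ip C f f = 1}"
      unfolding S_def Wdef supp_in_def by (rule set_eqI) simp
    then show ?thesis using c1 c2 c3 by (simp add: closed_Int)
  qed
  have compS: "compact S"
  proof -
    have "compact ({f. \<forall>y. f y \<in> (if y \<in> C then {-1..1} else {0})} \<inter> S)"
      by (rule compact_Int_closed[OF compact_box closedS])
    then show ?thesis by (simp only: Int_absorb1[OF Sbox])
  qed
  have gpos: "ip C g g > 0"
  proof -
    have "ip C g g \<noteq> 0"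
    proof
      assume "ip C g g = 0"
      moreover have "y0 \<in> C" using g Wsupp by blast
      ultimately show False using ip_zero[OF finC] g(2) by blast
    qed
    then show ?thesis using ip_nonneg[of C g] by simp
  qed
  define g0 where "g0 = (\<lambda>y. (1 / sqrt (ip C g g)) * g y)"
  have "g0 \<in> S"
  proof -
    have "g0 \<in> W" unfolding g0_def by (rule Wscale[OF g(1)])
    moreover have "ip C g0 g0 = 1"
      unfolding g0_def ip_scale_left ip_scale_right using gpos
      by (simp add: power2_eq_square[symmetric])
    ultimately show ?thesis unfolding S_def by auto
  qed
  then have Sne: "S \<noteq> {}" by auto
  have contq: "continuous_on S q"
  proof -
    have "q = (\<lambda>f. \<Sum>y\<in>C. f y * (\<Sum>y'\<in>C. a y y' * f y'))"
      unfolding q_def ip_def Aop_def by (intro ext sum.cong) auto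
    moreover have "continuous_on S (\<lambda>f. \<Sum>y\<in>C. f y * (\<Sum>y'\<in>C. a y y' * f y'))"
      by (intro continuous_on_sum continuous_on_mult continuous_on_const cont_coord)
    ultimately show ?thesis by simp
  qed
  obtain u where uS: "u \<in> S" and umax: "\<forall>f\<in>S. q f \<le> q u"
    using continuous_attains_sup[OF compS Sne contq] by blast
  have uW: "u \<in> W" and u1: "ip C u u = 1" using uS unfolding S_def by auto
  have qscale: "q (\<lambda>y. c * f y) = c^2 * q f" for c f
    unfolding q_def Aop_scale ip_scale_left ip_scale_right
    by (simp add: power2_eq_square)
  have key: "ip C h (Aop a C u) = 0" if hW: "h \<in> W" and hu: "ip C h u = 0" for h
  proof -
    let ?D = "q u * ip C h h - q h"
    have "2 * s * ip C h (Aop a C u) \<le> s^2 * ?D" for s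
    proof -
      define w where "w = (\<lambda>y. u y + s * h y)"
      have wW: "w \<in> W" unfolding w_def by (rule Wlin[OF uW hW])
      have ww: "ip C w w = 1 + s^2 * ip C h h"
        unfolding w_def ip_add_left ip_add_right using u1 hu ip_sym[of C h u]
        by (simp add: power2_eq_square algebra_simps)
      have wpos: "ip C w w > 0" using ww ip_nonneg[of C h]
        by (metis add_pos_nonneg mult_nonneg_nonneg zero_le_power2 zero_less_one)
      define w0 where "w0 = (\<lambda>y. (1 / sqrt (ip C w w)) * w y)"
      have "w0 \<in> S"
      proof -
        have "w0 \<in> W" unfolding w0_def by (rule Wscale[OF wW])
        moreover have "ip C w0 w0 = 1"
          unfolding w0_def ip_scale_left ip_scale_right using wpos
          by (simp add: power2_eq_square[symmetric])
        ultimately show ?thesis unfolding S_def by auto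
      qed
      then have "q w0 \<le> q u" using umax by auto
      moreover have "q w0 = q w / ip C w w"
        unfolding w0_def qscale using wpos by (simp add: power_divide)
      ultimately have "q w \<le> q u * ip C w w" using wpos by (simp add: divide_le_eq)
      moreover have "q w = q u + 2 * s * ip C h (Aop a C u) + s^2 * q h"
      proof -
        have "q w = ip C w (\<lambda>y. Aop a C u y + s * Aop a C h y)"
          unfolding q_def w_def Aop_lin ..
        also have "\<dots> = ip C u (Aop a C u) + s * ip C u (Aop a C h) + s * (ip C h (Aop a C u) + s * ip C h (Aop a C h))"
          unfolding w_def ip_add_left ip_add_right by (simp add: algebra_simps)
        also have "ip C u (Aop a C h) = ip C h (Aop a C u)"
          using Aop_sym[OF symm, of u h] ip_sym by metis
        finally show ?thesis unfolding q_def by (simp add: power2_eq_square algebra_simps)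
      qed
      ultimately show ?thesis unfolding ww by (simp add: algebra_simps)
    qed
    then show ?thesis using quad_zero by blast
  qed
  define h where "h = (\<lambda>y. Aop a C u y - q u * u y)"
  have hW: "h \<in> W" unfolding h_def by (rule Wdiff[OF Winv[OF uW] uW])
  have "ip C h u = ip C (Aop a C u) u - q u * ip C u u" unfolding h_def by (rule ip_diff_left)
  also have "ip C (Aop a C u) u = q u" unfolding q_def by (rule ip_sym)
  finally have hu: "ip C h u = 0" using u1 by simp
  have hh: "(\<lambda>y. Aop a C u y - q u * u y) = h" by (simp add: h_def)
  have "ip C h h = ip C h (Aop a C u) - q u * ip C h u"
    using ip_diff_right[of C h "Aop a C u" "q u" u] unfolding hh .
  then have "ip C h h = 0" using key[OF hW hu] hu by simp
  then have "h y = 0" if "y \<in> C" for y using ip_zero[OF finC _ that] by blast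
  then have "\<forall>y\<in>C. (\<Sum>y'\<in>C. a y y' * u y') = q u * u y"
    unfolding h_def Aop_def by auto
  then show ?thesis using uW u1 by blast
qed


definition OE :: "'a set \<Rightarrow> ('a \<Rightarrow> 'a \<Rightarrow> real) \<Rightarrow> nat \<Rightarrow> (nat \<Rightarrow> real) \<Rightarrow> (nat \<Rightarrow> 'a \<Rightarrow> real) \<Rightarrow> bool" where
  "OE C a K lam v \<longleftrightarrow>
     (\<forall>k<K. supp_in C (v k) \<and> (\<forall>y\<in>C. (\<Sum>y'\<in>C. a y y' * v k y') = lam k * v k y)) \<and>
     (\<forall>i<K. \<forall>j<K. ip C (v i) (v j) = (if i = j then 1 else 0))"

lemma ip_sum_left: "ip C (\<lambda>y. \<Sum>k<K. c k * v k y) g = (\<Sum>k<K. c k * ip C (v k) g)"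
proof -
  have "ip C (\<lambda>y. \<Sum>k<K. c k * v k y) g = (\<Sum>y\<in>C. \<Sum>k<K. c k * (v k y * g y))"
    unfolding ip_def by (simp add: sum_distrib_right mult.assoc)
  also have "\<dots> = (\<Sum>k<K. \<Sum>y\<in>C. c k * (v k y * g y))" by (rule sum.swap)
  also have "\<dots> = (\<Sum>k<K. c k * ip C (v k) g)" unfolding ip_def by (simp add: sum_distrib_left)
  finally show ?thesis .
qed

lemma ip_sum_right: "ip C g (\<lambda>y. \<Sum>k<K. c k * v k y) = (\<Sum>k<K. c k * ip C g (v k))"
  using ip_sum_left[of C c v K g] ip_sym by (metis (no_types, lifting) sum.cong)

lemma OE_coef:
  assumes "OE C a K lam v" "j < K"
  shows "ip C (v j) (\<lambda>y. \<Sum>k<K. c k * v k y) = c j"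
proof -
  have "ip C (v j) (\<lambda>y. \<Sum>k<K. c k * v k y) = (\<Sum>k<K. c k * ip C (v j) (v k))"
    by (rule ip_sum_right)
  also have "\<dots> = (\<Sum>k<K. c k * (if j = k then 1 else 0))"
    using assms unfolding OE_def by (intro sum.cong) auto
  also have "\<dots> = c j" using assms(2) by (simp add: if_distrib cong: if_cong)
  finally show ?thesis .
qed

lemma Bessel:
  assumes "OE C a K lam v"
  shows "(\<Sum>k<K. (ip C (v k) f)^2) \<le> ip C f f"
proof -
  define c where "c k = ip C (v k) f" for k
  define S where "S = (\<lambda>y. \<Sum>k<K. c k * v k y)"
  have SS: "ip C S S = (\<Sum>k<K. c k * c k)"
    unfolding S_def ip_sum_left using OE_coef[OF assms] by (intro sum.cong) auto
  have Sf: "ip C S f = (\<Sum>k<K. c k * c k)"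
    unfolding S_def ip_sum_left c_def by simp
  have "0 \<le> ip C (\<lambda>y. f y - 1 * S y) (\<lambda>y. f y - 1 * S y)" by (rule ip_nonneg)
  also have "\<dots> = ip C f f - 1 * ip C f S - 1 * (ip C S f - 1 * ip C S S)"
    by (simp only: ip_diff_left ip_diff_right)
  also have "\<dots> = ip C f f - (\<Sum>k<K. c k * c k)"
    using SS Sf ip_sym[of C f S] by simp
  finally show ?thesis unfolding c_def by (simp add: power2_eq_square)
qed

lemma OE_le_card:
  assumes finC: "finite C" and oe: "OE C a K lam v"
  shows "K \<le> card C"
proof -
  have one: "(\<Sum>k<K. (v k y)^2) \<le> 1" if "y \<in> C" for y
  proof -
    define d where "d = (\<lambda>y'. if y' = y then 1 else (0::real))"
    have "ip C (v k) d = v k y" for k unfolding ip_def d_def using that finC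
      by (simp add: if_distrib cong: if_cong)
    moreover have "ip C d d = 1" unfolding ip_def d_def using that finC
      by (simp add: if_distrib cong: if_cong)
    ultimately show ?thesis using Bessel[OF oe, of d] by simp
  qed
  have "real K = (\<Sum>k<K. ip C (v k) (v k))"
    using oe unfolding OE_def by simp
  also have "\<dots> = (\<Sum>y\<in>C. \<Sum>k<K. (v k y)^2)"
    unfolding ip_def by (subst sum.swap) (simp add: power2_eq_square)
  also have "\<dots> \<le> (\<Sum>y\<in>C. 1)" by (rule sum_mono) (rule one)
  also have "\<dots> = real (card C)" by simp
  finally show ?thesis by simp
qed

lemma spectral:
  fixes C :: "'a set" and a :: "'a \<Rightarrow> 'a \<Rightarrow> real"
  assumes finC: "finite C" and symm: "\<forall>y\<in>C. \<forall>y'\<in>C. a y y' = a y' y"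
  shows "\<exists>K lam v. OE C a K lam v \<and> K \<le> card C \<and>
           (\<forall>f. supp_in C f \<longrightarrow> (\<forall>y. f y = (\<Sum>k<K. ip C (v k) f * v k y)))"
proof -
  let ?Ks = "{K. \<exists>lam v. OE C a K lam v}"
  have "0 \<in> ?Ks" unfolding OE_def by auto
  have Kb: "?Ks \<subseteq> {..card C}" using OE_le_card[OF finC] by auto
  then have finK: "finite ?Ks" using finite_subset by blast
  define K where "K = Max ?Ks"
  have "K \<in> ?Ks" unfolding K_def using finK \<open>0 \<in> ?Ks\<close> by (intro Max_in) auto
  then obtain lam v where oe: "OE C a K lam v" by blast
  have maxK: "K' \<le> K" if "K' \<in> ?Ks" for K' unfolding K_def using finK that by simp
  have complete: "f y0 = (\<Sum>k<K. ip C (v k) f * v k y0)" if fs: "supp_in C f" for f y0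
  proof (rule ccontr)
    assume ne: "f y0 \<noteq> (\<Sum>k<K. ip C (v k) f * v k y0)"
    define g where "g = (\<lambda>y. f y - 1 * (\<Sum>k<K. ip C (v k) f * v k y))"
    define W where "W = {f. supp_in C f \<and> (\<forall>k<K. ip C (v k) f = 0)}"
    have vk: "\<forall>k<K. supp_in C (v k) \<and> (\<forall>y\<in>C. (\<Sum>y'\<in>C. a y y' * v k y') = lam k * v k y)"
      using oe unfolding OE_def by blast
    have "g \<in> W"
    proof -
      have "supp_in C g" using fs vk unfolding g_def supp_in_def by auto
      moreover have "ip C (v j) g = 0" if "j < K" for j
        unfolding g_def ip_diff_right OE_coef[OF oe that] by simp
      ultimately show ?thesis unfolding W_def by auto
    qed
    moreover have "g y0 \<noteq> 0" using ne unfolding g_def by simp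
    ultimately obtain u l where uW: "u \<in> W" and u1: "ip C u u = 1"
      and ue: "\<forall>y\<in>C. (\<Sum>y'\<in>C. a y y' * u y') = l * u y"
      using eig_in_W[OF finC symm vk W_def] by blast
    have A: "\<forall>k<Suc K. supp_in C ((v(K := u)) k) \<and>
          (\<forall>y\<in>C. (\<Sum>y'\<in>C. a y y' * (v(K := u)) k y') = (lam(K := l)) k * (v(K := u)) k y)"
    proof (intro allI impI)
      fix k assume "k < Suc K"
      then show "supp_in C ((v(K := u)) k) \<and>
          (\<forall>y\<in>C. (\<Sum>y'\<in>C. a y y' * (v(K := u)) k y') = (lam(K := l)) k * (v(K := u)) k y)"
        using vk uW ue unfolding W_def by (cases "k = K") auto
    qed
    have B: "\<forall>i<Suc K. \<forall>j<Suc K. ip C ((v(K := u)) i) ((v(K := u)) j) = (if i = j then 1 else 0)"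
    proof (intro allI impI)
      fix i j assume i: "i < Suc K" and j: "j < Suc K"
      have uo: "ip C (v k) u = 0" if "k < K" for k using uW that unfolding W_def by auto
      show "ip C ((v(K := u)) i) ((v(K := u)) j) = (if i = j then 1 else 0)"
      proof (cases "i = K"; cases "j = K")
        assume "i = K" "j = K" then show ?thesis using u1 by simp
      next
        assume "i = K" "j \<noteq> K" then show ?thesis using uo[of j] j ip_sym[of C u "v j"] by simp
      next
        assume "i \<noteq> K" "j = K" then show ?thesis using uo[of i] i by simp
      next
        assume "i \<noteq> K" "j \<noteq> K" then show ?thesis using oe i j unfolding OE_def by simp
      qed
    qed
    have "OE C a (Suc K) (lam(K := l)) (v(K := u))" unfolding OE_def using A B by blast
    then have "Suc K \<in> ?Ks" by blast
    then show False using maxK by fastforce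
  qed
  show ?thesis using oe OE_le_card[OF finC oe] complete by blast
qed


lemma J1:
  fixes \<rho> :: real assumes "\<rho> > 0"
  shows "(\<integral>\<^sup>+ x. ennreal (indicator {\<rho>..} x * (1 / x^2)) \<partial>lborel) = ennreal (1/\<rho>)"
proof -
  have "((\<lambda>x. 1 / x ^ 2) has_integral 1 / (real (2 - 1) * \<rho> ^ (2 - 1))) {\<rho>..}"
    by (rule has_integral_inverse_power_to_inf) (use assms in auto)
  then have "((\<lambda>x::real. 1 / x ^ 2) has_integral 1 / \<rho>) {\<rho>..}" by simp
  then show ?thesis
    using nn_integral_has_integral_lebesgue[of "{\<rho>..}" "\<lambda>x. 1/x^2" "1/\<rho>"] by simp
qed

lemma J:
  fixes \<rho> l :: real assumes rho: "\<rho> > 0"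
  shows "(\<integral>\<^sup>+ e. ennreal (indicator {e. \<rho> < \<bar>e - l\<bar>} e * (1 / (l - e)^2)) \<partial>lborel) \<le> ennreal (2/\<rho>)"
proof -
  define h where "h x = ennreal (indicator {\<rho>..} x * (1 / x^2))" for x :: real
  have hm[measurable]: "h \<in> borel_measurable borel" unfolding h_def by measurable
  define f0 where "f0 e = ennreal (indicator {e. \<rho> < \<bar>e - l\<bar>} e * (1 / (l - e)^2))" for e
  have f0m[measurable]: "f0 \<in> borel_measurable borel" unfolding f0_def by measurable
  have "(\<integral>\<^sup>+ e. ennreal (indicator {e. \<rho> < \<bar>e - l\<bar>} e * (1 / (l - e)^2)) \<partial>lborel)
      = (\<integral>\<^sup>+ x. f0 (l + 1 * x) \<partial>lborel)"
    using nn_integral_real_affine[OF f0m, of 1 l] unfolding f0_def by simp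
  also have "\<dots> = (\<integral>\<^sup>+ x. ennreal (indicator {x. \<rho> < \<bar>x\<bar>} x * (1 / x^2)) \<partial>lborel)"
    unfolding f0_def by (simp add: indicator_def)
  also have "\<dots> \<le> (\<integral>\<^sup>+ x. h x + h (0 + (-1) * x) \<partial>lborel)"
  proof (rule nn_integral_mono)
    fix x :: real
    show "ennreal (indicator {x. \<rho> < \<bar>x\<bar>} x * (1 / x^2)) \<le> h x + h (0 + (-1) * x)"
      unfolding h_def by (cases "\<rho> < x"; cases "x < - \<rho>") (auto simp: indicator_def)
  qed
  also have "\<dots> = (\<integral>\<^sup>+ x. h x \<partial>lborel) + (\<integral>\<^sup>+ x. h (0 + (-1) * x) \<partial>lborel)"
    by (rule nn_integral_add) measurable
  also have "(\<integral>\<^sup>+ x. h (0 + (-1) * x) \<partial>lborel) = (\<integral>\<^sup>+ x. h x \<partial>lborel)"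
    using nn_integral_real_affine[OF hm, of "-1" 0] by simp
  also have "(\<integral>\<^sup>+ x. h x \<partial>lborel) = ennreal (1/\<rho>)" unfolding h_def by (rule J1[OF rho])
  also have "ennreal (1/\<rho>) + ennreal (1/\<rho>) = ennreal (2/\<rho>)"
    using rho by (simp flip: ennreal_plus)
  finally show ?thesis .
qed


lemma bad_sets:
  fixes lam c :: "nat \<Rightarrow> real" and K :: nat and \<rho> t :: real
  shows "(\<Union>k<K. {lam k - \<rho> .. lam k + \<rho>}) \<union> {e. t^2 < (\<Sum>k<K. c k / (lam k - e)^2)} \<in> sets lborel"
  by measurable

lemma bad_measure:
  fixes lam c :: "nat \<Rightarrow> real" and K :: nat and \<rho> t :: real
  assumes rho: "\<rho> > 0" and t: "t > 0" and c: "\<And>k. c k \<ge> 0"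
  shows "emeasure lborel ((\<Union>k<K. {lam k - \<rho> .. lam k + \<rho>}) \<union> {e. t^2 < (\<Sum>k<K. c k / (lam k - e)^2)})
           \<le> ennreal (2 * real K * \<rho> + 2 * (\<Sum>k<K. c k) / (\<rho> * t^2))"
proof -
  define B where "B = (\<Union>k<K. {lam k - \<rho> .. lam k + \<rho>})"
  define G where "G e = (\<Sum>k<K. c k / (lam k - e)^2)" for e
  define f where "f k e = ennreal (indicator {e. \<rho> < \<bar>e - lam k\<bar>} e * (1 / (lam k - e)^2))" for k e
  define X where "X = {e \<in> -B. 1 \<le> ennreal (1/t^2) * ennreal (G e)}"
  have Bm[measurable]: "B \<in> sets borel" unfolding B_def by measurable
  have Gm[measurable]: "G \<in> borel_measurable borel" unfolding G_def by measurable
  have fm[measurable]: "f k \<in> borel_measurable borel" for k unfolding f_def by measurable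
  have Xm[measurable]: "X \<in> sets borel" unfolding X_def by measurable
  have Gnn: "G e \<ge> 0" for e unfolding G_def using c by (intro sum_nonneg) auto
  have sub: "B \<union> {e. t^2 < G e} \<subseteq> B \<union> X"
  proof
    fix e assume "e \<in> B \<union> {e. t^2 < G e}"
    moreover have "e \<in> X" if "e \<notin> B" "t^2 < G e"
    proof -
      have "1 \<le> G e / t^2" using that t by simp
      also have "G e / t^2 = (1/t^2) * G e" by simp
      finally have "ennreal 1 \<le> ennreal ((1/t^2) * G e)" by (rule ennreal_leI)
      also have "ennreal ((1/t^2) * G e) = ennreal (1/t^2) * ennreal (G e)"
        by (rule ennreal_mult) (use Gnn in auto)
      finally show ?thesis unfolding X_def using that by simp
    qed
    ultimately show "e \<in> B \<union> X" by blast
  qed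
  have eB: "emeasure lborel B \<le> ennreal (2 * real K * \<rho>)"
  proof -
    have "emeasure lborel B \<le> (\<Sum>k<K. emeasure lborel {lam k - \<rho> .. lam k + \<rho>})"
      unfolding B_def by (rule emeasure_subadditive_finite) auto
    also have "\<dots> = (\<Sum>k<K. ennreal (2 * \<rho>))"
      using rho by (intro sum.cong refl) (simp add: emeasure_lborel_Icc_eq)
    also have "\<dots> = ennreal (\<Sum>k<K. 2 * \<rho>)" using rho by (subst sum_ennreal) auto
    also have "\<dots> = ennreal (2 * real K * \<rho>)" by (simp add: algebra_simps)
    finally show ?thesis .
  qed
  have eX: "emeasure lborel X \<le> ennreal (2 * (\<Sum>k<K. c k) / (\<rho> * t^2))"
  proof -
    have "emeasure lborel X \<le> ennreal (1/t^2) * (\<integral>\<^sup>+ e. ennreal (G e) * indicator (-B) e \<partial>lborel)"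
      unfolding X_def by (rule nn_integral_Markov_inequality) auto
    also have "(\<integral>\<^sup>+ e. ennreal (G e) * indicator (-B) e \<partial>lborel) \<le> (\<integral>\<^sup>+ e. (\<Sum>k<K. ennreal (c k) * f k e) \<partial>lborel)"
    proof (rule nn_integral_mono)
      fix e
      show "ennreal (G e) * indicator (-B) e \<le> (\<Sum>k<K. ennreal (c k) * f k e)"
      proof (cases "e \<in> B")
        case True then show ?thesis by simp
      next
        case False
        have far: "\<rho> < \<bar>e - lam k\<bar>" if "k < K" for k
        proof -
          have "\<not> (lam k - \<rho> \<le> e \<and> e \<le> lam k + \<rho>)" using False that unfolding B_def by auto
          then show ?thesis by (auto simp: abs_if not_le)
        qed
        have "ennreal (G e) = (\<Sum>k<K. ennreal (c k / (lam k - e)^2))"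
          unfolding G_def using c by (subst sum_ennreal) auto
        also have "\<dots> = (\<Sum>k<K. ennreal (c k) * f k e)"
          unfolding f_def using far c by (intro sum.cong refl) (simp add: ennreal_mult[symmetric] divide_inverse)
        finally show ?thesis using False by simp
      qed
    qed
    also have "\<dots> = (\<Sum>k<K. ennreal (c k) * (\<integral>\<^sup>+ e. f k e \<partial>lborel))"
      by (subst nn_integral_sum) (auto simp: nn_integral_cmult)
    also have "\<dots> \<le> (\<Sum>k<K. ennreal (c k) * ennreal (2/\<rho>))"
      unfolding f_def by (intro sum_mono mult_left_mono J[OF rho]) auto
    also have "\<dots> = ennreal ((\<Sum>k<K. c k) * (2/\<rho>))"
      using c rho by (simp add: ennreal_mult[symmetric] sum_distrib_right sum_divide_distrib)
    finally have "emeasure lborel X \<le> ennreal (1/t^2) * ennreal ((\<Sum>k<K. c k) * (2/\<rho>))"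
      by (simp add: mult_left_mono)
    also have "\<dots> = ennreal (2 * (\<Sum>k<K. c k) / (\<rho> * t^2))"
      using c rho t by (simp add: ennreal_mult[symmetric] sum_nonneg field_simps)
    finally show ?thesis .
  qed
  have "emeasure lborel (B \<union> {e. t^2 < G e}) \<le> emeasure lborel (B \<union> X)"
    by (rule emeasure_mono[OF sub]) simp
  also have "\<dots> \<le> emeasure lborel B + emeasure lborel X"
    by (rule emeasure_subadditive) auto
  also have "\<dots> \<le> ennreal (2 * real K * \<rho>) + ennreal (2 * (\<Sum>k<K. c k) / (\<rho> * t^2))"
    by (intro add_mono eB eX)
  also have "\<dots> = ennreal (2 * real K * \<rho> + 2 * (\<Sum>k<K. c k) / (\<rho> * t^2))"
    using c rho t by (simp add: sum_nonneg)
  finally show ?thesis unfolding B_def G_def .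
qed


definition cf :: "'a set \<Rightarrow> ('a \<Rightarrow> real) \<Rightarrow> ('a \<Rightarrow> complex) \<Rightarrow> complex" where
  "cf C w h = (\<Sum>y\<in>C. complex_of_real (w y) * h y)"

definition Res :: "'a set \<Rightarrow> nat \<Rightarrow> (nat \<Rightarrow> real) \<Rightarrow> (nat \<Rightarrow> 'a \<Rightarrow> real) \<Rightarrow> complex \<Rightarrow> ('a \<Rightarrow> complex) \<Rightarrow> 'a \<Rightarrow> complex" where
  "Res C K lam v z h y = (\<Sum>k<K. cf C (v k) h / (complex_of_real (lam k) - z) * complex_of_real (v k y))"

locale sdata =
  fixes C :: "'a set" and a :: "'a \<Rightarrow> 'a \<Rightarrow> real" and K :: nat and lam :: "nat \<Rightarrow> real" and v :: "nat \<Rightarrow> 'a \<Rightarrow> real"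
  assumes finC: "finite C"
    and symm: "\<forall>y\<in>C. \<forall>y'\<in>C. a y y' = a y' y"
    and oe: "OE C a K lam v"
    and compl: "\<forall>f. supp_in C f \<longrightarrow> (\<forall>y. f y = (\<Sum>k<K. ip C (v k) f * v k y))"
begin

lemma vsupp: "k < K \<Longrightarrow> y \<notin> C \<Longrightarrow> v k y = 0"
  using oe unfolding OE_def supp_in_def by auto

lemma veig: "k < K \<Longrightarrow> y \<in> C \<Longrightarrow> (\<Sum>y'\<in>C. a y y' * v k y') = lam k * v k y"
  using oe unfolding OE_def by auto

lemma vorth: "i < K \<Longrightarrow> j < K \<Longrightarrow> ip C (v i) (v j) = (if i = j then 1 else 0)"
  using oe unfolding OE_def by auto

lemma compl_c:
  assumes "supp_in C f"
  shows "f y = (\<Sum>k<K. cf C (v k) f * complex_of_real (v k y))"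
proof -
  have s1: "supp_in C (\<lambda>y. Re (f y))" "supp_in C (\<lambda>y. Im (f y))"
    using assms unfolding supp_in_def by auto
  have e1: "Re (f y) = (\<Sum>k<K. ip C (v k) (\<lambda>y. Re (f y)) * v k y)" using compl s1(1) by blast
  have e2: "Im (f y) = (\<Sum>k<K. ip C (v k) (\<lambda>y. Im (f y)) * v k y)" using compl s1(2) by blast
  have r: "Re (cf C (v k) f) = ip C (v k) (\<lambda>y. Re (f y))" for k
    unfolding cf_def ip_def by (simp add: Re_sum)
  have i: "Im (cf C (v k) f) = ip C (v k) (\<lambda>y. Im (f y))" for k
    unfolding cf_def ip_def by (simp add: Im_sum)
  show ?thesis
    by (rule complex_eqI) (simp_all add: Re_sum Im_sum r i e1[symmetric] e2[symmetric])
qed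

lemma Res_supp: "supp_in C (Res C K lam v z h)"
  unfolding supp_in_def Res_def using vsupp by simp

lemma cf_eig:
  assumes "k < K"
  shows "(\<Sum>y\<in>C. complex_of_real (v k y) * (\<Sum>y'\<in>C. complex_of_real (a y y') * f y'))
         = complex_of_real (lam k) * cf C (v k) f"
proof -
  have "(\<Sum>y\<in>C. complex_of_real (v k y) * (\<Sum>y'\<in>C. complex_of_real (a y y') * f y'))
      = (\<Sum>y'\<in>C. \<Sum>y\<in>C. complex_of_real (v k y) * complex_of_real (a y y') * f y')"
    by (subst sum.swap) (simp add: sum_distrib_left mult.assoc)
  also have "\<dots> = (\<Sum>y'\<in>C. complex_of_real (\<Sum>y\<in>C. a y' y * v k y) * f y')"
  proof (intro sum.cong refl)
    fix y' assume y': "y' \<in> C"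
    have "complex_of_real (\<Sum>y\<in>C. a y' y * v k y) * f y' = (\<Sum>y\<in>C. complex_of_real (a y' y * v k y) * f y')"
      by (simp add: sum_distrib_right)
    also have "\<dots> = (\<Sum>y\<in>C. complex_of_real (v k y) * complex_of_real (a y y') * f y')"
      using symm y' by (intro sum.cong refl) (simp add: mult.commute)
    finally show "(\<Sum>y\<in>C. complex_of_real (v k y) * complex_of_real (a y y') * f y') =
        complex_of_real (\<Sum>y\<in>C. a y' y * v k y) * f y'" by simp
  qed
  also have "\<dots> = (\<Sum>y'\<in>C. complex_of_real (lam k * v k y') * f y')"
    by (intro sum.cong refl) (simp add: veig[OF assms])
  also have "\<dots> = complex_of_real (lam k) * cf C (v k) f"
    unfolding cf_def by (simp add: sum_distrib_left mult.assoc)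
  finally show ?thesis .
qed

lemma Res_unique:
  assumes z: "Im z \<noteq> 0" and fs: "supp_in C f"
    and eq: "\<forall>y\<in>C. (\<Sum>y'\<in>C. complex_of_real (a y y') * f y') - z * f y = h y"
  shows "f y = Res C K lam v z h y"
proof -
  have ne: "complex_of_real (lam k) - z \<noteq> 0" for k using z by (auto simp: complex_eq_iff)
  have c: "cf C (v k) h = (complex_of_real (lam k) - z) * cf C (v k) f" if "k < K" for k
  proof -
    have "cf C (v k) h = (\<Sum>y\<in>C. complex_of_real (v k y) * ((\<Sum>y'\<in>C. complex_of_real (a y y') * f y') - z * f y))"
      unfolding cf_def using eq by (intro sum.cong refl) simp
    also have "\<dots> = (\<Sum>y\<in>C. complex_of_real (v k y) * (\<Sum>y'\<in>C. complex_of_real (a y y') * f y')) - z * cf C (v k) f"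
      unfolding cf_def by (simp add: algebra_simps sum_subtractf sum_distrib_left)
    also have "\<dots> = (complex_of_real (lam k) - z) * cf C (v k) f"
      unfolding cf_eig[OF that] by (simp add: algebra_simps)
    finally show ?thesis .
  qed
  have "f y = (\<Sum>k<K. cf C (v k) f * complex_of_real (v k y))" by (rule compl_c[OF fs])
  also have "\<dots> = Res C K lam v z h y"
    unfolding Res_def using ne c by (intro sum.cong refl) simp
  finally show ?thesis .
qed

lemma Res_solves:
  assumes z: "Im z \<noteq> 0" and hs: "supp_in C h" and y: "y \<in> C"
  shows "(\<Sum>y'\<in>C. complex_of_real (a y y') * Res C K lam v z h y') - z * Res C K lam v z h y = h y"
proof -
  have ne: "complex_of_real (lam k) - z \<noteq> 0" for k using z by (auto simp: complex_eq_iff)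
  define \<alpha> where "\<alpha> k = cf C (v k) h / (complex_of_real (lam k) - z)" for k
  have "(\<Sum>y'\<in>C. complex_of_real (a y y') * Res C K lam v z h y')
      = (\<Sum>k<K. \<alpha> k * complex_of_real (\<Sum>y'\<in>C. a y y' * v k y'))"
    unfolding Res_def \<alpha>_def[symmetric]
    by (simp add: sum_distrib_left sum_distrib_right sum.swap[of _ C] algebra_simps)
  also have "\<dots> = (\<Sum>k<K. \<alpha> k * complex_of_real (lam k * v k y))"
    using veig y by (intro sum.cong refl) simp
  finally have A: "(\<Sum>y'\<in>C. complex_of_real (a y y') * Res C K lam v z h y')
      = (\<Sum>k<K. \<alpha> k * complex_of_real (lam k * v k y))" .
  have B: "z * Res C K lam v z h y = (\<Sum>k<K. z * (\<alpha> k * complex_of_real (v k y)))"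
    unfolding Res_def \<alpha>_def by (simp add: sum_distrib_left)
  have "(\<Sum>y'\<in>C. complex_of_real (a y y') * Res C K lam v z h y') - z * Res C K lam v z h y
      = (\<Sum>k<K. \<alpha> k * complex_of_real (lam k * v k y)) - (\<Sum>k<K. z * (\<alpha> k * complex_of_real (v k y)))"
    unfolding A B ..
  also have "\<dots> = (\<Sum>k<K. \<alpha> k * (complex_of_real (lam k) - z) * complex_of_real (v k y))"
    by (simp add: sum_subtractf[symmetric] algebra_simps)
  also have "\<dots> = (\<Sum>k<K. cf C (v k) h * complex_of_real (v k y))"
    unfolding \<alpha>_def using ne by simp
  also have "\<dots> = h y" using compl_c[OF hs] by simp
  finally show ?thesis .
qed

lemma parseval:
  "(\<Sum>y\<in>C. (cmod (\<Sum>k<K. \<beta> k * complex_of_real (v k y)))^2) = (\<Sum>k<K. (cmod (\<beta> k))^2)"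
proof -
  have "complex_of_real (\<Sum>y\<in>C. (cmod (\<Sum>k<K. \<beta> k * complex_of_real (v k y)))^2)
      = (\<Sum>y\<in>C. complex_of_real ((cmod (\<Sum>k<K. \<beta> k * complex_of_real (v k y)))^2))"
    by (rule of_real_sum)
  also have "\<dots> = (\<Sum>y\<in>C. (\<Sum>k<K. \<beta> k * complex_of_real (v k y)) * cnj (\<Sum>j<K. \<beta> j * complex_of_real (v j y)))"
    by (intro sum.cong refl) (rule complex_norm_square)
  also have "\<dots> = (\<Sum>y\<in>C. \<Sum>k<K. \<Sum>j<K. \<beta> k * cnj (\<beta> j) * complex_of_real (v k y * v j y))"
    by (intro sum.cong refl) (simp only: cnj_sum sum_product, simp add: algebra_simps)
  also have "\<dots> = (\<Sum>k<K. \<Sum>y\<in>C. \<Sum>j<K. \<beta> k * cnj (\<beta> j) * complex_of_real (v k y * v j y))"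
    by (rule sum.swap)
  also have "\<dots> = (\<Sum>k<K. \<Sum>j<K. \<Sum>y\<in>C. \<beta> k * cnj (\<beta> j) * complex_of_real (v k y * v j y))"
    by (intro sum.cong refl) (rule sum.swap)
  also have "\<dots> = (\<Sum>k<K. \<Sum>j<K. \<beta> k * cnj (\<beta> j) * complex_of_real (ip C (v k) (v j)))"
    unfolding ip_def by (simp add: sum_distrib_left)
  also have "\<dots> = (\<Sum>k<K. \<beta> k * cnj (\<beta> k))"
    by (intro sum.cong refl) (simp add: vorth if_distrib cong: if_cong)
  also have "\<dots> = (\<Sum>k<K. complex_of_real ((cmod (\<beta> k))^2))"
    by (intro sum.cong refl) (rule complex_norm_square[symmetric])
  also have "\<dots> = complex_of_real (\<Sum>k<K. (cmod (\<beta> k))^2)"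
    by (rule of_real_sum[symmetric])
  finally show ?thesis using of_real_eq_iff by blast
qed


lemma Kle: "K \<le> card C" by (rule OE_le_card[OF finC oe])

lemma bessel_one: "(\<Sum>k<K. (\<Sum>y\<in>C. v k y)^2) \<le> real (card C)"
  using Bessel[OF oe, of "\<lambda>_. 1"] unfolding ip_def by simp

lemma cf_delta: "x \<in> C \<Longrightarrow> cf C (v k) (\<lambda>y. if y = x then 1 else 0) = complex_of_real (v k x)"
  unfolding cf_def using finC by (simp add: if_distrib cong: if_cong)

lemma cf_one: "cf C (v k) (\<lambda>y. 1) = complex_of_real (\<Sum>y\<in>C. v k y)"
  unfolding cf_def by simp

lemma Res_lin: "Res C K lam v z (\<lambda>y. h1 y + c * h2 y) y = Res C K lam v z h1 y + c * Res C K lam v z h2 y"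
  unfolding Res_def cf_def
  by (simp add: sum.distrib sum_distrib_left add_divide_distrib algebra_simps)

lemma normsq:
  "(\<Sum>y\<in>C. (cmod (Res C K lam v z h y))^2) = (\<Sum>k<K. (cmod (cf C (v k) h))^2 / (cmod (complex_of_real (lam k) - z))^2)"
  unfolding Res_def using parseval[of "\<lambda>k. cf C (v k) h / (complex_of_real (lam k) - z)"]
  by (simp add: norm_divide power_divide)

lemma cmod_lz: "(cmod (complex_of_real l - z))^2 = (l - Re z)^2 + (Im z)^2"
  by (simp add: cmod_power2)

lemma normsq_le:
  assumes "\<forall>k<K. lam k \<noteq> Re z"
  shows "(\<Sum>y\<in>C. (cmod (Res C K lam v z h y))^2) \<le> (\<Sum>k<K. (cmod (cf C (v k) h))^2 / (lam k - Re z)^2)"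
  unfolding normsq
proof (rule sum_mono)
  fix k assume "k \<in> {..<K}"
  then have p1: "(lam k - Re z)^2 > 0" using assms by simp
  moreover have p2: "(lam k - Re z)^2 \<le> (cmod (complex_of_real (lam k) - z))^2"
    unfolding cmod_lz by simp
  ultimately have p3: "(cmod (complex_of_real (lam k) - z))^2 > 0" by linarith
  show "(cmod (cf C (v k) h))^2 / (cmod (complex_of_real (lam k) - z))^2 \<le> (cmod (cf C (v k) h))^2 / (lam k - Re z)^2"
    by (rule divide_left_mono[OF p2]) (use p1 p3 in auto)
qed

lemma Im_Res_delta:
  assumes x: "x \<in> C"
  shows "Im (Res C K lam v z (\<lambda>y. if y = x then 1 else 0) x)
         = Im z * (\<Sum>y\<in>C. (cmod (Res C K lam v z (\<lambda>y. if y = x then 1 else 0) y))^2)"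
proof -
  have t: "Im (complex_of_real r / (complex_of_real l - z) * complex_of_real r) = Im z * (r^2 / (cmod (complex_of_real l - z))^2)" for r l
    unfolding cmod_lz by (simp add: Im_divide power2_eq_square algebra_simps)
  have "Im (Res C K lam v z (\<lambda>y. if y = x then 1 else 0) x)
      = (\<Sum>k<K. Im z * ((v k x)^2 / (cmod (complex_of_real (lam k) - z))^2))"
    unfolding Res_def cf_delta[OF x] Im_sum by (intro sum.cong refl) (rule t)
  also have "\<dots> = Im z * (\<Sum>y\<in>C. (cmod (Res C K lam v z (\<lambda>y. if y = x then 1 else 0) y))^2)"
    unfolding normsq cf_delta[OF x] by (simp add: sum_distrib_left)
  finally show ?thesis .
qed

end


definition aK :: "(nat \<Rightarrow> 'x set set) \<Rightarrow> (nat \<Rightarrow> nat) \<Rightarrow> (nat \<Rightarrow> real) \<Rightarrow> ('x \<Rightarrow> real) \<Rightarrow> nat \<Rightarrow> 'x \<Rightarrow> 'x \<Rightarrow> real" where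
  "aK P n p \<omega> R y y' = (\<Sum>r\<le>R. p r * (if y' \<in> cluster P r y then 1 / real (NN n r) else 0)) + (if y' = y then \<omega> y else 0)"

context hs
begin

lemma aK_symm: "aK P n p \<omega> R y y' = aK P n p \<omega> R y' y"
  unfolding aK_def using Q_sym by (auto intro!: sum.cong)

lemma Eop_kernel:
  assumes y: "y \<in> Q R x" and r: "r \<le> R"
  shows "Eop P n r f y = (\<Sum>y'\<in>Q R x. complex_of_real (if y' \<in> Q r y then 1 / real (NN n r) else 0) * f y')"
proof -
  have sub: "Q r y \<subseteq> Q R x" using Q_mono[OF r, of y] Q_same[OF y] by simp
  have "(\<Sum>y'\<in>Q R x. complex_of_real (if y' \<in> Q r y then 1 / real (NN n r) else 0) * f y')
      = (\<Sum>y'\<in>Q R x. if y' \<in> Q r y then complex_of_real (1 / real (NN n r)) * f y' else 0)"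
    by (intro sum.cong refl) simp
  also have "\<dots> = (\<Sum>y'\<in>Q R x \<inter> Q r y. complex_of_real (1 / real (NN n r)) * f y')"
    by (rule sum.inter_restrict[symmetric]) (rule Q_finite)
  also have "Q R x \<inter> Q r y = Q r y" using sub by blast
  also have "(\<Sum>y'\<in>Q r y. complex_of_real (1 / real (NN n r)) * f y') = Eop P n r f y"
    unfolding Eop_eq by (simp add: sum_distrib_left)
  finally show ?thesis by simp
qed

lemma kernel_sum:
  assumes y: "y \<in> Q R x"
  shows "(\<Sum>r\<le>R. complex_of_real (p r) * Eop P n r f y) + complex_of_real (\<omega> y) * f y
       = (\<Sum>y'\<in>Q R x. complex_of_real (aK P n p \<omega> R y y') * f y')"
proof -
  have "(\<Sum>r\<le>R. complex_of_real (p r) * Eop P n r f y)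
      = (\<Sum>r\<le>R. \<Sum>y'\<in>Q R x. complex_of_real (p r * (if y' \<in> Q r y then 1 / real (NN n r) else 0)) * f y')"
    by (intro sum.cong refl) (simp add: Eop_kernel[OF y] sum_distrib_left mult.assoc)
  also have "\<dots> = (\<Sum>y'\<in>Q R x. \<Sum>r\<le>R. complex_of_real (p r * (if y' \<in> Q r y then 1 / real (NN n r) else 0)) * f y')"
    by (rule sum.swap)
  finally have A: "(\<Sum>r\<le>R. complex_of_real (p r) * Eop P n r f y)
      = (\<Sum>y'\<in>Q R x. complex_of_real (\<Sum>r\<le>R. p r * (if y' \<in> Q r y then 1 / real (NN n r) else 0)) * f y')"
    by (simp add: sum_distrib_right)
  have B: "complex_of_real (\<omega> y) * f y = (\<Sum>y'\<in>Q R x. complex_of_real (if y' = y then \<omega> y else 0) * f y')"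
  proof -
    have "(\<Sum>y'\<in>Q R x. complex_of_real (if y' = y then \<omega> y else 0) * f y')
        = (\<Sum>y'\<in>Q R x. if y' = y then complex_of_real (\<omega> y) * f y else 0)"
      by (intro sum.cong refl) auto
    also have "\<dots> = complex_of_real (\<omega> y) * f y" using y Q_finite by simp
    finally show ?thesis by simp
  qed
  show ?thesis unfolding A B aK_def by (simp add: sum.distrib distrib_right)
qed

lemma Eop_far:
  assumes y: "y \<in> Q R x" and r: "R \<le> r"
  shows "Eop P n r f y = Eop P n r f x"
proof -
  have "y \<in> Q r x" using Q_mono[OF r] y by blast
  then have "Q r y = Q r x" by (rule Q_same)
  then show ?thesis unfolding Eop_eq by simp
qed

lemma Eop_bound:
  assumes B: "\<forall>y. cmod (f y) \<le> B"
  shows "cmod (Eop P n r f y) \<le> B"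
proof -
  have "cmod (\<Sum>y'\<in>Q r y. f y') \<le> (\<Sum>y'\<in>Q r y. cmod (f y'))" by (rule norm_sum)
  also have "\<dots> \<le> (\<Sum>y'\<in>Q r y. B)" using B by (intro sum_mono) auto
  also have "\<dots> = real (NN n r) * B" using Q_card by simp
  finally have "cmod (\<Sum>y'\<in>Q r y. f y') \<le> real (NN n r) * B" .
  moreover have "real (NN n r) > 0" using NN_pos by simp
  ultimately show ?thesis unfolding Eop_eq by (simp add: norm_mult norm_divide field_simps)
qed

lemma Hop_split:
  assumes ps: "summable p" and pnn: "\<forall>r. p r \<ge> 0" and B: "\<forall>y. cmod (\<phi> y) \<le> B" and y: "y \<in> Q R x"
  shows "Hop P n p \<omega> \<phi> y = (\<Sum>y'\<in>Q R x. complex_of_real (aK P n p \<omega> R y y') * \<phi> y')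
            + (\<Sum>i. complex_of_real (p (i + Suc R)) * Eop P n (i + Suc R) \<phi> x)"
proof -
  define g where "g r = complex_of_real (p r) * Eop P n r \<phi> y" for r
  have sg: "summable g"
  proof (rule summable_comparison_test)
    show "\<exists>N. \<forall>r\<ge>N. norm (g r) \<le> p r * B"
      unfolding g_def using Eop_bound[OF B] pnn by (auto simp: norm_mult intro!: mult_left_mono)
    show "summable (\<lambda>r. p r * B)" using ps by (rule summable_mult2)
  qed
  have "Lap P n p \<phi> y = suminf g" unfolding Lap_def g_def ..
  also have "\<dots> = (\<Sum>i. g (i + Suc R)) + (\<Sum>i<Suc R. g i)" by (rule suminf_split_initial_segment[OF sg])
  also have "(\<Sum>i<Suc R. g i) = (\<Sum>r\<le>R. g r)" using lessThan_Suc_atMost by simp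
  also have "(\<Sum>i. g (i + Suc R)) = (\<Sum>i. complex_of_real (p (i + Suc R)) * Eop P n (i + Suc R) \<phi> x)"
    unfolding g_def using Eop_far[OF y] by simp
  finally have "Lap P n p \<phi> y = (\<Sum>i. complex_of_real (p (i + Suc R)) * Eop P n (i + Suc R) \<phi> x) + (\<Sum>r\<le>R. g r)" .
  then show ?thesis unfolding Hop_def kernel_sum[OF y, symmetric] g_def by simp
qed

lemma aK_Suc:
  assumes y: "y \<in> Q (Suc R) x" and y': "y' \<in> Q (Suc R) x"
  shows "aK P n p \<omega> (Suc R) y y' = aK P n p \<omega> R y y' + p (Suc R) / real (NN n (Suc R))"
proof -
  have "y' \<in> Q (Suc R) y" using y y' Q_same by metis
  then show ?thesis unfolding aK_def by simp
qed

lemma aK_zero: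
  assumes y: "y \<notin> Q R x" and y': "y' \<in> Q R x"
  shows "aK P n p \<omega> R y y' = 0"
proof -
  have "y' \<notin> Q r y" if "r \<le> R" for r
  proof
    assume "y' \<in> Q r y"
    then have "y' \<in> Q R y" using Q_mono[OF that] by blast
    then have "Q R y = Q R x" using Q_same y' by metis
    then show False using y Q_mem by metis
  qed
  moreover have "y' \<noteq> y" using y y' by blast
  ultimately show ?thesis unfolding aK_def by simp
qed

end


lemma Im_inv_lz:
  fixes l e \<epsilon> :: real
  shows "Im (1 / (complex_of_real l - Complex e \<epsilon>)) = \<epsilon> / ((l - e)^2 + \<epsilon>^2)"
  by (simp add: Im_divide power2_eq_square)

lemma meas_final:
  fixes \<mu> :: "real measure" and e M :: real
  assumes ps: "prob_space \<mu>" and se: "sets \<mu> = sets borel"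
    and bnd: "\<And>k::nat. Im (\<integral>l. 1 / (complex_of_real l - Complex e (1 / Suc k)) \<partial>\<mu>) \<le> (1 / Suc k) * M"
  shows "(\<integral>\<^sup>+ l. (if l = e then \<infinity> else ennreal (1 / (e - l)\<^sup>2)) \<partial>\<mu>) < \<infinity>"
proof -
  interpret prob_space \<mu> by (rule ps)
  define \<epsilon> where "\<epsilon> k = 1 / real (Suc k)" for k
  have epos: "\<epsilon> k > 0" for k unfolding \<epsilon>_def by simp
  have meas: "f \<in> borel_measurable \<mu>" if "f \<in> borel_measurable borel" for f :: "real \<Rightarrow> 'b::topological_space"
    by (subst measurable_cong_sets[OF se, of borel borel]) (simp_all add: that)
  define f where "f k l = 1 / ((l - e)^2 + (\<epsilon> k)^2)" for k l
  have fpos: "f k l > 0" for k l unfolding f_def using epos[of k] by (simp add: add_nonneg_pos)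
  have fint: "integrable \<mu> (f k)" for k
  proof (rule integrable_const_bound[where B = "1 / (\<epsilon> k)^2"])
    show "AE l in \<mu>. norm (f k l) \<le> 1 / (\<epsilon> k)^2"
    proof (rule AE_I2)
      fix l
      have "(\<epsilon> k)^2 \<le> (l - e)^2 + (\<epsilon> k)^2" by simp
      then show "norm (f k l) \<le> 1 / (\<epsilon> k)^2" unfolding f_def using epos[of k]
        by (simp add: frac_le)
    qed
    show "f k \<in> borel_measurable \<mu>" unfolding f_def by (rule meas) measurable
  qed
  have intf: "(\<integral>l. f k l \<partial>\<mu>) \<le> M" for k
  proof -
    let ?g = "\<lambda>l. 1 / (complex_of_real l - Complex e (\<epsilon> k))"
    have gint: "integrable \<mu> ?g"
    proof (rule integrable_const_bound[where B = "1 / \<epsilon> k"])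
      show "AE l in \<mu>. norm (?g l) \<le> 1 / \<epsilon> k"
      proof (rule AE_I2)
        fix l
        have "\<epsilon> k \<le> cmod (complex_of_real l - Complex e (\<epsilon> k))"
          using abs_Im_le_cmod[of "complex_of_real l - Complex e (\<epsilon> k)"] epos[of k] by simp
        then show "norm (?g l) \<le> 1 / \<epsilon> k" using epos[of k]
          by (simp add: norm_divide frac_le)
      qed
      show "?g \<in> borel_measurable \<mu>" by (rule meas) measurable
    qed
    have "Im (\<integral>l. ?g l \<partial>\<mu>) = (\<integral>l. Im (?g l) \<partial>\<mu>)" using gint by simp
    also have "\<dots> = (\<integral>l. \<epsilon> k * f k l \<partial>\<mu>)"
      unfolding Im_inv_lz f_def by simp
    also have "\<dots> = \<epsilon> k * (\<integral>l. f k l \<partial>\<mu>)" by simp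
    finally have "\<epsilon> k * (\<integral>l. f k l \<partial>\<mu>) \<le> \<epsilon> k * M"
      using bnd[of k] unfolding \<epsilon>_def by simp
    then show ?thesis using epos[of k] by simp
  qed
  have nnf: "(\<integral>\<^sup>+ l. ennreal (f k l) \<partial>\<mu>) \<le> ennreal M" for k
  proof -
    have "(\<integral>\<^sup>+ l. ennreal (f k l) \<partial>\<mu>) = ennreal (\<integral>l. f k l \<partial>\<mu>)"
      by (rule nn_integral_eq_integral[OF fint]) (use fpos in \<open>auto intro: less_imp_le\<close>)
    also have "\<dots> \<le> ennreal M" using intf[of k] by (rule ennreal_leI)
    finally show ?thesis .
  qed
  have inc: "incseq (\<lambda>k l. ennreal (f k l))"
  proof (rule incseq_SucI, rule le_funI)
    fix k l
    have "\<epsilon> (Suc k) \<le> \<epsilon> k" unfolding \<epsilon>_def by (simp add: frac_le)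
    then have "(\<epsilon> (Suc k))^2 \<le> (\<epsilon> k)^2" using epos[of "Suc k"] by (intro power_mono) auto
    then have "f k l \<le> f (Suc k) l" unfolding f_def using fpos[of "Suc k" l] epos[of "Suc k"]
      by (intro divide_left_mono) (auto intro!: add_nonneg_pos mult_pos_pos)
    then show "ennreal (f k l) \<le> ennreal (f (Suc k) l)" by (rule ennreal_leI)
  qed
  have sup: "(SUP k. ennreal (f k l)) = (if l = e then \<infinity> else ennreal (1 / (e - l)\<^sup>2))" for l
  proof (cases "l = e")
    case True
    have "(SUP k. ennreal (f k l)) \<ge> (SUP k. of_nat k)"
    proof (rule SUP_mono)
      fix k :: nat
      have fk: "f k l = (real (Suc k))^2" unfolding f_def \<epsilon>_def True by (simp add: power_divide)
      have "k \<le> Suc k * Suc k" by simp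
      then have "real k \<le> real (Suc k) * real (Suc k)" by (metis of_nat_le_iff of_nat_mult)
      then have "real k \<le> f k l" unfolding fk by (simp add: power2_eq_square)
      then show "\<exists>k'\<in>UNIV. of_nat k \<le> ennreal (f k' l)"
        by (intro bexI[of _ k]) (auto simp: ennreal_of_nat_eq_real_of_nat intro: ennreal_leI)
    qed
    then show ?thesis using True by (simp add: ennreal_SUP_of_nat_eq_top top_unique)
  next
    case False
    have lim: "(\<lambda>k. f k l) \<longlonglongrightarrow> 1 / (e - l)^2"
    proof -
      have "\<epsilon> \<longlonglongrightarrow> 0" unfolding \<epsilon>_def using LIMSEQ_inverse_real_of_nat
        by (simp add: inverse_eq_divide)
      then have "(\<lambda>k. 1 / ((l - e)^2 + (\<epsilon> k)^2)) \<longlonglongrightarrow> 1 / ((l - e)^2 + 0^2)"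
        using False by (intro tendsto_intros) auto
      then show ?thesis unfolding f_def by (simp add: power2_commute)
    qed
    have "(\<lambda>k. ennreal (f k l)) \<longlonglongrightarrow> (SUP k. ennreal (f k l))"
      by (rule LIMSEQ_SUP) (use inc in \<open>auto simp: incseq_def le_fun_def\<close>)
    moreover have "(\<lambda>k. ennreal (f k l)) \<longlonglongrightarrow> ennreal (1 / (e - l)^2)"
      using lim by (rule tendsto_ennrealI)
    ultimately show ?thesis using False LIMSEQ_unique by auto
  qed
  have "(\<integral>\<^sup>+ l. (if l = e then \<infinity> else ennreal (1 / (e - l)\<^sup>2)) \<partial>\<mu>) = (\<integral>\<^sup>+ l. (SUP k. ennreal (f k l)) \<partial>\<mu>)"
    using sup by simp
  also have "\<dots> = (SUP k. \<integral>\<^sup>+ l. ennreal (f k l) \<partial>\<mu>)"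
  proof (rule nn_integral_monotone_convergence_SUP)
    show "incseq (\<lambda>k l. ennreal (f k l))" by (rule inc)
    show "(\<lambda>l. ennreal (f k l)) \<in> borel_measurable \<mu>" for k unfolding f_def by (rule meas) measurable
  qed
  also have "\<dots> \<le> ennreal M" by (rule SUP_least) (rule nnf)
  also have "\<dots> < \<infinity>" by simp
  finally show ?thesis .
qed


locale mctx = hs P n for P :: "nat \<Rightarrow> 'x set set" and n :: "nat \<Rightarrow> nat" +
  fixes p u :: "nat \<Rightarrow> real" and \<omega> :: "'x \<Rightarrow> real" and x :: 'x
  assumes wok: "weights_ok p" and upos: "\<forall>r. u r > 0"
    and su: "summable (\<lambda>r. 1 / u (Suc r))"
    and sa: "summable (\<lambda>r. p (Suc r) * real (NN n r) * u r * u (Suc r))"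
begin

lemma pnn: "p r \<ge> 0"
proof (cases "r = 0")
  case True then show ?thesis using wok unfolding weights_ok_def by simp
next
  case False
  have "\<forall>r\<ge>1. p r > 0" using wok unfolding weights_ok_def by (elim conjE)
  then have "p r > 0" using False by simp
  then show ?thesis by simp
qed

lemma psum: "summable p"
  using wok unfolding weights_ok_def sums_def summable_def by blast

lemma Nge1: "real (NN n R) \<ge> 1"
  using NN_pos[of R] by simp

lemma aK_sym: "\<forall>y\<in>Q R x. \<forall>y'\<in>Q R x. aK P n p \<omega> R y y' = aK P n p \<omega> R y' y"
  using aK_symm by blast

lemma sd_ex: "\<exists>Kf lamf vf. \<forall>R. sdata (Q R x) (aK P n p \<omega> R) (Kf R) (lamf R) (vf R)"
proof -
  have "\<forall>R. \<exists>t. sdata (Q R x) (aK P n p \<omega> R) (fst t) (fst (snd t)) (snd (snd t))"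
  proof
    fix R
    obtain K lam v where "OE (Q R x) (aK P n p \<omega> R) K lam v"
      "\<forall>f. supp_in (Q R x) f \<longrightarrow> (\<forall>y. f y = (\<Sum>k<K. ip (Q R x) (v k) f * v k y))"
      using spectral[OF Q_finite aK_sym] by blast
    then have "sdata (Q R x) (aK P n p \<omega> R) K lam v"
      unfolding sdata_def using Q_finite aK_sym by blast
    then show "\<exists>t. sdata (Q R x) (aK P n p \<omega> R) (fst t) (fst (snd t)) (snd (snd t))"
      by (intro exI[of _ "(K, lam, v)"]) simp
  qed
  then obtain T where "\<forall>R. sdata (Q R x) (aK P n p \<omega> R) (fst (T R)) (fst (snd (T R))) (snd (snd (T R)))"
    by metis
  then show ?thesis
    by (intro exI[of _ "\<lambda>R. fst (T R)"] exI[of _ "\<lambda>R. fst (snd (T R))"] exI[of _ "\<lambda>R. snd (snd (T R))"])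
qed

end

locale mctx2 = mctx P n p u \<omega> x for P :: "nat \<Rightarrow> 'x set set" and n p u \<omega> x +
  fixes Kf :: "nat \<Rightarrow> nat" and lamf :: "nat \<Rightarrow> nat \<Rightarrow> real" and vf :: "nat \<Rightarrow> nat \<Rightarrow> 'x \<Rightarrow> real"
  assumes sd: "\<And>R. sdata (Q R x) (aK P n p \<omega> R) (Kf R) (lamf R) (vf R)"
begin

abbreviation "Rs R z h \<equiv> Res (Q R x) (Kf R) (lamf R) (vf R) z h"

definition dl :: "'x \<Rightarrow> complex" where "dl y = (if y = x then 1 else 0)"
definition one :: "'x \<Rightarrow> complex" where "one y = 1"
definition tt :: "nat \<Rightarrow> real" where "tt R = real (NN n R) * u R"
definition cr :: "nat \<Rightarrow> nat \<Rightarrow> real" where "cr R k = (\<Sum>y\<in>Q R x. vf R k y)"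
definition G :: "nat \<Rightarrow> real \<Rightarrow> real" where "G R e = (\<Sum>k<Kf R. (cr R k)^2 / (lamf R k - e)^2)"
definition F :: "nat \<Rightarrow> real \<Rightarrow> real" where "F R e = (\<Sum>k<Kf R. (vf R k x)^2 / (lamf R k - e)^2)"
definition Bad :: "nat \<Rightarrow> real set" where
  "Bad R = (\<Union>k<Kf R. {lamf R k - 1 / tt R .. lamf R k + 1 / tt R}) \<union> {e. (tt R)^2 < G R e}"
definition L :: "nat \<Rightarrow> complex \<Rightarrow> real" where
  "L R z = L2_set (\<lambda>y. cmod (Rs R z dl y)) (Q R x)"

lemma one_eq: "one = (\<lambda>y. 1)" by (rule ext) (simp add: one_def)

lemma dl_eq: "dl = (\<lambda>y. if y = x then 1 else 0)" by (rule ext) (simp add: dl_def)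

lemma tt_pos: "tt R > 0" unfolding tt_def using NN_pos upos by simp

lemma Bad_sets: "Bad R \<in> sets lborel"
  unfolding Bad_def G_def by (rule bad_sets)

lemma Bad_meas: "emeasure lborel (Bad R) \<le> ennreal (4 / u R)"
proof -
  interpret s: sdata "Q R x" "aK P n p \<omega> R" "Kf R" "lamf R" "vf R" by (rule sd)
  have card: "card (Q R x) = NN n R" using Q_card by simp
  have K: "real (Kf R) \<le> real (NN n R)" using s.Kle card by simp
  have C: "(\<Sum>k<Kf R. (cr R k)^2) \<le> real (NN n R)" using s.bessel_one card unfolding cr_def by simp
  have u: "u R > 0" using upos by simp
  have N: "real (NN n R) > 0" using NN_pos by simp
  have "emeasure lborel (Bad R) \<le> ennreal (2 * real (Kf R) * (1 / tt R) + 2 * (\<Sum>k<Kf R. (cr R k)^2) / ((1 / tt R) * (tt R)^2))"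
    unfolding Bad_def G_def by (rule bad_measure) (use tt_pos in auto)
  also have "2 * real (Kf R) * (1 / tt R) + 2 * (\<Sum>k<Kf R. (cr R k)^2) / ((1 / tt R) * (tt R)^2) \<le> 4 / u R"
  proof -
    have "2 * real (Kf R) * (1 / tt R) \<le> 2 * real (NN n R) * (1 / tt R)"
      using K tt_pos[of R] by (intro mult_right_mono) auto
    also have "\<dots> = 2 / u R" unfolding tt_def using N u by simp
    finally have a: "2 * real (Kf R) * (1 / tt R) \<le> 2 / u R" .
    have "2 * (\<Sum>k<Kf R. (cr R k)^2) / ((1 / tt R) * (tt R)^2) = 2 * (\<Sum>k<Kf R. (cr R k)^2) / tt R"
      using tt_pos[of R] by (simp add: power2_eq_square)
    also have "\<dots> \<le> 2 * real (NN n R) / tt R"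
      using C tt_pos[of R] by (intro divide_right_mono) auto
    also have "\<dots> = 2 / u R" unfolding tt_def using N u by simp
    finally have b: "2 * (\<Sum>k<Kf R. (cr R k)^2) / ((1 / tt R) * (tt R)^2) \<le> 2 / u R" .
    show ?thesis using a b by simp
  qed
  then have "ennreal (2 * real (Kf R) * (1 / tt R) + 2 * (\<Sum>k<Kf R. (cr R k)^2) / ((1 / tt R) * (tt R)^2)) \<le> ennreal (4 / u R)"
    by (rule ennreal_leI)
  finally show ?thesis .
qed

lemma good_lam:
  assumes e: "e \<notin> Bad R" and k: "k < Kf R" shows "lamf R k \<noteq> e"
proof
  assume "lamf R k = e"
  then have "e \<in> {lamf R k - 1 / tt R .. lamf R k + 1 / tt R}" using tt_pos[of R] by simp
  then have "e \<in> Bad R" unfolding Bad_def using k by blast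
  then show False using e by blast
qed

lemma good_G: "e \<notin> Bad R \<Longrightarrow> G R e \<le> (tt R)^2"
  unfolding Bad_def by auto

lemma g_bound:
  assumes e: "e \<notin> Bad R" and z: "Re z = e"
  shows "L2_set (\<lambda>y. cmod (Rs R z one y)) (Q R x) \<le> tt R"
proof -
  interpret s: sdata "Q R x" "aK P n p \<omega> R" "Kf R" "lamf R" "vf R" by (rule sd)
  have "(\<Sum>y\<in>Q R x. (cmod (Rs R z one y))^2) \<le> (\<Sum>k<Kf R. (cmod (cf (Q R x) (vf R k) one))^2 / (lamf R k - Re z)^2)"
    by (rule s.normsq_le) (use good_lam[OF e] z in auto)
  also have "\<dots> = G R e" unfolding G_def cr_def one_eq s.cf_one z norm_of_real power2_abs ..
  also have "\<dots> \<le> (tt R)^2" by (rule good_G[OF e])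
  finally have "sqrt (\<Sum>y\<in>Q R x. (cmod (Rs R z one y))^2) \<le> sqrt ((tt R)^2)" by (rule real_sqrt_le_mono)
  then show ?thesis unfolding L2_set_def using tt_pos[of R] by simp
qed

lemma psi_bound:
  assumes e: "e \<notin> Bad R" and z: "Re z = e"
  shows "(L R z)^2 \<le> F R e"
proof -
  interpret s: sdata "Q R x" "aK P n p \<omega> R" "Kf R" "lamf R" "vf R" by (rule sd)
  have "(L R z)^2 = (\<Sum>y\<in>Q R x. (cmod (Rs R z dl y))^2)"
    unfolding L_def L2_set_def by (simp add: sum_nonneg)
  also have "\<dots> \<le> (\<Sum>k<Kf R. (cmod (cf (Q R x) (vf R k) dl))^2 / (lamf R k - Re z)^2)"
    by (rule s.normsq_le) (use good_lam[OF e] z in auto)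
  also have "\<dots> = F R e" unfolding F_def dl_eq s.cf_delta[OF Q_mem] z norm_of_real power2_abs ..
  finally show ?thesis .
qed


lemma recur:
  assumes z: "Im z \<noteq> 0"
  shows "L (Suc R) z \<le> L R z + p (Suc R) / real (NN n (Suc R)) * (sqrt (real (NN n R)) * L R z)
            * L2_set (\<lambda>y. cmod (Rs (Suc R) z one y)) (Q (Suc R) x)"
proof -
  interpret s0: sdata "Q R x" "aK P n p \<omega> R" "Kf R" "lamf R" "vf R" by (rule sd)
  interpret s1: sdata "Q (Suc R) x" "aK P n p \<omega> (Suc R)" "Kf (Suc R)" "lamf (Suc R)" "vf (Suc R)" by (rule sd)
  define \<psi> where "\<psi> = Rs R z dl"
  define S where "S = (\<Sum>y\<in>Q R x. \<psi> y)"
  define cS where "cS = complex_of_real (p (Suc R) / real (NN n (Suc R))) * S"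
  define g where "g = Rs (Suc R) z one"
  have sub: "Q R x \<subseteq> Q (Suc R) x" by (rule Q_Suc)
  have \<psi>0: "\<psi> y = 0" if "y \<notin> Q R x" for y using s0.Res_supp that unfolding \<psi>_def supp_in_def by blast
  have restr: "(\<Sum>y'\<in>Q (Suc R) x. f y' * \<psi> y') = (\<Sum>y'\<in>Q R x. f y' * \<psi> y')" for f :: "'x \<Rightarrow> complex"
    by (rule sum.mono_neutral_right[OF Q_finite sub]) (use \<psi>0 in auto)
  have dlsupp: "supp_in (Q R x) dl" unfolding supp_in_def dl_def using Q_mem by auto
  have eq1: "(\<Sum>y'\<in>Q (Suc R) x. complex_of_real (aK P n p \<omega> (Suc R) y y') * \<psi> y') - z * \<psi> y = dl y + cS * one y"
    if y: "y \<in> Q (Suc R) x" for y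
  proof -
    have "(\<Sum>y'\<in>Q (Suc R) x. complex_of_real (aK P n p \<omega> (Suc R) y y') * \<psi> y')
        = (\<Sum>y'\<in>Q (Suc R) x. complex_of_real (aK P n p \<omega> R y y') * \<psi> y' + complex_of_real (p (Suc R) / real (NN n (Suc R))) * \<psi> y')"
      using aK_Suc[OF y] by (intro sum.cong refl) (simp add: distrib_right)
    also have "\<dots> = (\<Sum>y'\<in>Q (Suc R) x. complex_of_real (aK P n p \<omega> R y y') * \<psi> y') + cS"
      unfolding sum.distrib cS_def S_def using restr[of "\<lambda>_. complex_of_real (p (Suc R) / real (NN n (Suc R)))"]
      by (simp add: sum_distrib_left)
    also have "(\<Sum>y'\<in>Q (Suc R) x. complex_of_real (aK P n p \<omega> R y y') * \<psi> y') = (\<Sum>y'\<in>Q R x. complex_of_real (aK P n p \<omega> R y y') * \<psi> y')"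
      by (rule restr)
    finally have A: "(\<Sum>y'\<in>Q (Suc R) x. complex_of_real (aK P n p \<omega> (Suc R) y y') * \<psi> y')
        = (\<Sum>y'\<in>Q R x. complex_of_real (aK P n p \<omega> R y y') * \<psi> y') + cS" .
    show ?thesis
    proof (cases "y \<in> Q R x")
      case True
      have "(\<Sum>y'\<in>Q R x. complex_of_real (aK P n p \<omega> R y y') * \<psi> y') - z * \<psi> y = dl y"
        unfolding \<psi>_def by (rule s0.Res_solves[OF z dlsupp True])
      then show ?thesis unfolding A one_def by (simp add: algebra_simps)
    next
      case False
      have "(\<Sum>y'\<in>Q R x. complex_of_real (aK P n p \<omega> R y y') * \<psi> y') = 0"
        using aK_zero[OF False] by simp
      moreover have "\<psi> y = 0" using \<psi>0[OF False] .
      moreover have "dl y = 0" unfolding dl_def using False Q_mem by auto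
      ultimately show ?thesis unfolding A one_def by simp
    qed
  qed
  have \<psi>supp1: "supp_in (Q (Suc R) x) \<psi>" unfolding supp_in_def using \<psi>0 sub by blast
  have rep: "Rs (Suc R) z dl y = \<psi> y - cS * g y" for y
  proof -
    have "\<psi> y = Rs (Suc R) z (\<lambda>y. dl y + cS * one y) y"
      by (rule s1.Res_unique[OF z \<psi>supp1]) (use eq1 in blast)
    also have "\<dots> = Rs (Suc R) z dl y + cS * g y" unfolding g_def by (rule s1.Res_lin)
    finally show ?thesis by simp
  qed
  have Lpsi: "L2_set (\<lambda>y. cmod (\<psi> y)) (Q (Suc R) x) = L R z"
  proof -
    have "(\<Sum>y\<in>Q (Suc R) x. (cmod (\<psi> y))^2) = (\<Sum>y\<in>Q R x. (cmod (\<psi> y))^2)"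
      by (rule sum.mono_neutral_right[OF Q_finite sub]) (use \<psi>0 in auto)
    then show ?thesis unfolding L2_set_def L_def \<psi>_def by simp
  qed
  have Sb: "cmod S \<le> sqrt (real (NN n R)) * L R z"
  proof -
    have "cmod S \<le> (\<Sum>y\<in>Q R x. cmod (\<psi> y))" unfolding S_def by (rule norm_sum)
    also have "\<dots> = (\<Sum>y\<in>Q R x. \<bar>cmod (\<psi> y)\<bar> * \<bar>1\<bar>)" by simp
    also have "\<dots> \<le> L2_set (\<lambda>y. cmod (\<psi> y)) (Q R x) * L2_set (\<lambda>y. 1) (Q R x)" by (rule L2_set_mult_ineq)
    also have "L2_set (\<lambda>y. 1) (Q R x) = sqrt (real (NN n R))" unfolding L2_set_def using Q_card by simp
    also have "L2_set (\<lambda>y. cmod (\<psi> y)) (Q R x) = L R z" unfolding L_def \<psi>_def ..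
    finally show ?thesis by (simp add: mult.commute)
  qed
  have pN: "p (Suc R) / real (NN n (Suc R)) \<ge> 0" using pnn NN_pos by simp
  have cSb: "cmod cS \<le> p (Suc R) / real (NN n (Suc R)) * (sqrt (real (NN n R)) * L R z)"
  proof -
    have "cmod cS = p (Suc R) / real (NN n (Suc R)) * cmod S"
      unfolding cS_def norm_mult norm_of_real using pN by (simp only: abs_of_nonneg)
    then show ?thesis using mult_left_mono[OF Sb pN] by simp
  qed
  have "L (Suc R) z = L2_set (\<lambda>y. cmod (\<psi> y - cS * g y)) (Q (Suc R) x)"
    unfolding L_def using rep by simp
  also have "\<dots> \<le> L2_set (\<lambda>y. cmod (\<psi> y) + cmod cS * cmod (g y)) (Q (Suc R) x)"
    by (rule L2_set_mono) (auto simp flip: norm_mult intro: norm_triangle_ineq4)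
  also have "\<dots> \<le> L2_set (\<lambda>y. cmod (\<psi> y)) (Q (Suc R) x) + L2_set (\<lambda>y. cmod cS * cmod (g y)) (Q (Suc R) x)"
    by (rule L2_set_triangle_ineq)
  also have "L2_set (\<lambda>y. cmod cS * cmod (g y)) (Q (Suc R) x) = cmod cS * L2_set (\<lambda>y. cmod (g y)) (Q (Suc R) x)"
    by (rule L2_set_right_distrib[symmetric]) simp
  also have "\<dots> \<le> p (Suc R) / real (NN n (Suc R)) * (sqrt (real (NN n R)) * L R z) * L2_set (\<lambda>y. cmod (g y)) (Q (Suc R) x)"
    by (rule mult_right_mono[OF cSb]) simp
  finally show ?thesis unfolding Lpsi g_def by simp
qed


definition ap :: "nat \<Rightarrow> real" where "ap r = p (Suc r) * real (NN n r) * u r * u (Suc r)"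

lemma ap_nn: "ap r \<ge> 0" unfolding ap_def using pnn upos by (simp add: less_imp_le)

lemma ap_sum: "summable ap" unfolding ap_def by (rule sa)

lemma L_nn: "L R z \<ge> 0" unfolding L_def by simp

lemma Lbound:
  assumes good: "\<forall>R\<ge>R0. e \<notin> Bad R \<and> u R \<ge> 1" and z: "Im z \<noteq> 0" "Re z = e"
    and R: "R0 \<le> R"
  shows "L R z \<le> sqrt (F R0 e) * exp (\<Sum>r\<in>{R0..<R}. ap r)"
  using R
proof (induction R rule: dec_induct)
  case base
  have "(L R0 z)^2 \<le> F R0 e" by (rule psi_bound) (use good z in auto)
  then have "sqrt ((L R0 z)^2) \<le> sqrt (F R0 e)" by (rule real_sqrt_le_mono)
  then show ?case using L_nn[of R0 z] by simp
next
  case (step m)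
  have gm: "e \<notin> Bad (Suc m)" and um: "u m \<ge> 1" using good step.hyps by auto
  let ?N = "real (NN n m)" and ?N' = "real (NN n (Suc m))" and ?Lm = "L m z"
  let ?g = "L2_set (\<lambda>y. cmod (Rs (Suc m) z one y)) (Q (Suc m) x)"
  have N1: "?N \<ge> 1" and N'pos: "?N' > 0" using Nge1 NN_pos by auto
  have pm: "p (Suc m) \<ge> 0" by (rule pnn)
  have Lm0: "?Lm \<ge> 0" by (rule L_nn)
  have gb: "?g \<le> tt (Suc m)" by (rule g_bound[OF gm z(2)])
  have c0: "p (Suc m) / ?N' * (sqrt ?N * ?Lm) \<ge> 0" using pm N'pos Lm0 by simp
  have "L (Suc m) z \<le> ?Lm + p (Suc m) / ?N' * (sqrt ?N * ?Lm) * ?g" by (rule recur[OF z(1)])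
  also have "\<dots> \<le> ?Lm + p (Suc m) / ?N' * (sqrt ?N * ?Lm) * tt (Suc m)"
    using mult_left_mono[OF gb c0] by simp
  also have "p (Suc m) / ?N' * (sqrt ?N * ?Lm) * tt (Suc m) = p (Suc m) * sqrt ?N * u (Suc m) * ?Lm"
    unfolding tt_def using N'pos by (simp add: field_simps)
  also have "?Lm + p (Suc m) * sqrt ?N * u (Suc m) * ?Lm \<le> ?Lm + p (Suc m) * (?N * u m) * u (Suc m) * ?Lm"
  proof -
    have "?N * 1 \<le> ?N * ?N" by (rule mult_left_mono[OF N1]) simp
    then have "sqrt ?N \<le> sqrt (?N * ?N)" by (intro real_sqrt_le_mono) simp
    then have "sqrt ?N \<le> ?N" using N1 by simp
    also have "?N \<le> ?N * u m" using N1 um by simp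
    finally have "sqrt ?N \<le> ?N * u m" .
    then have "p (Suc m) * sqrt ?N * u (Suc m) * ?Lm \<le> p (Suc m) * (?N * u m) * u (Suc m) * ?Lm"
      using pm upos Lm0 by (intro mult_right_mono mult_left_mono) (auto simp: less_imp_le)
    then show ?thesis by simp
  qed
  also have "?Lm + p (Suc m) * (?N * u m) * u (Suc m) * ?Lm = ?Lm * (1 + ap m)"
    unfolding ap_def by (simp add: algebra_simps)
  also have "\<dots> \<le> ?Lm * exp (ap m)"
    using Lm0 by (intro mult_left_mono) (auto simp: add.commute exp_ge_add_one_self)
  also have "\<dots> \<le> sqrt (F R0 e) * exp (\<Sum>r\<in>{R0..<m}. ap r) * exp (ap m)"
    by (rule mult_right_mono[OF step.IH]) simp
  also have "\<dots> = sqrt (F R0 e) * exp (\<Sum>r\<in>{R0..<Suc m}. ap r)"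
    using step.hyps by (simp add: exp_add)
  finally show ?case .
qed

lemma phi_bound_aux:
  assumes l2: "l2 \<phi>" shows "\<exists>B. \<forall>y. cmod (\<phi> y) \<le> B"
proof -
  let ?f = "\<lambda>y. (cmod (\<phi> y))^2"
  have sm: "?f summable_on UNIV" using l2 unfolding l2_def .
  have "?f y \<le> infsum ?f UNIV" for y
  proof -
    have "sum ?f {y} \<le> infsum ?f UNIV" by (rule finite_sum_le_infsum[OF sm]) auto
    then show ?thesis by simp
  qed
  then have "cmod (\<phi> y) \<le> sqrt (infsum ?f UNIV)" for y
    using real_sqrt_le_mono[of "?f y"] by fastforce
  then show ?thesis by blast
qed

lemma Im_phi_bound:
  assumes z: "Im z \<noteq> 0"
    and eqH: "\<forall>y. Hop P n p \<omega> \<phi> y - z * \<phi> y = (if y = x then 1 else 0)"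
    and B: "\<forall>y. cmod (\<phi> y) \<le> Bp"
  shows "Im (\<phi> x) \<le> Im z * (L R z)^2 + Bp * (\<Sum>i. p (i + Suc R)) * L2_set (\<lambda>y. cmod (Rs R z one y)) (Q R x)"
proof -
  interpret s: sdata "Q R x" "aK P n p \<omega> R" "Kf R" "lamf R" "vf R" by (rule sd)
  define c where "c = (\<Sum>i. complex_of_real (p (i + Suc R)) * Eop P n (i + Suc R) \<phi> x)"
  define f where "f y = (if y \<in> Q R x then \<phi> y else 0)" for y
  have fs: "supp_in (Q R x) f" unfolding supp_in_def f_def by auto
  have feq: "(\<Sum>y'\<in>Q R x. complex_of_real (aK P n p \<omega> R y y') * f y') - z * f y = dl y + (- c) * one y"
    if y: "y \<in> Q R x" for y
  proof -
    have "Hop P n p \<omega> \<phi> y = (\<Sum>y'\<in>Q R x. complex_of_real (aK P n p \<omega> R y y') * \<phi> y') + c"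
      unfolding c_def by (rule Hop_split[OF psum _ B y]) (use pnn in auto)
    moreover have "(\<Sum>y'\<in>Q R x. complex_of_real (aK P n p \<omega> R y y') * f y') = (\<Sum>y'\<in>Q R x. complex_of_real (aK P n p \<omega> R y y') * \<phi> y')"
      unfolding f_def by (intro sum.cong refl) auto
    moreover have "f y = \<phi> y" unfolding f_def using y by simp
    ultimately show ?thesis using eqH[rule_format, of y] unfolding dl_def one_def by (simp add: algebra_simps)
  qed
  have "f x = Rs R z (\<lambda>y. dl y + (- c) * one y) x"
    by (rule s.Res_unique[OF z fs]) (use feq in blast)
  also have "\<dots> = Rs R z dl x + (- c) * Rs R z one x" by (rule s.Res_lin)
  finally have phix: "\<phi> x = Rs R z dl x - c * Rs R z one x" unfolding f_def using Q_mem by simp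
  have ImRs: "Im (Rs R z dl x) = Im z * (L R z)^2"
  proof -
    have "Im (Rs R z dl x) = Im z * (\<Sum>y\<in>Q R x. (cmod (Rs R z dl y))^2)"
      unfolding dl_eq by (rule s.Im_Res_delta[OF Q_mem])
    also have "(\<Sum>y\<in>Q R x. (cmod (Rs R z dl y))^2) = (L R z)^2"
      unfolding L_def L2_set_def by (simp add: sum_nonneg)
    finally show ?thesis .
  qed
  have cb: "cmod c \<le> Bp * (\<Sum>i. p (i + Suc R))"
  proof -
    have sp: "summable (\<lambda>i. p (i + Suc R) * Bp)"
      by (rule summable_mult2) (rule summable_ignore_initial_segment[OF psum])
    have "cmod c \<le> (\<Sum>i. p (i + Suc R) * Bp)" unfolding c_def
    proof (rule norm_suminf_le[OF _ sp])
      fix i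
      show "cmod (complex_of_real (p (i + Suc R)) * Eop P n (i + Suc R) \<phi> x) \<le> p (i + Suc R) * Bp"
        unfolding norm_mult norm_of_real using Eop_bound[OF B] pnn by (simp add: mult_left_mono)
    qed
    also have "\<dots> = Bp * (\<Sum>i. p (i + Suc R))"
      using suminf_mult2[OF summable_ignore_initial_segment[OF psum, of "Suc R"], of Bp] by (simp add: mult.commute)
    finally show ?thesis .
  qed
  have gx: "cmod (Rs R z one x) \<le> L2_set (\<lambda>y. cmod (Rs R z one y)) (Q R x)"
    by (rule member_le_L2_set[OF Q_finite Q_mem])
  have "Im (\<phi> x) = Im z * (L R z)^2 - Im (c * Rs R z one x)" unfolding phix ImRs[symmetric] by simp
  also have "\<dots> \<le> Im z * (L R z)^2 + cmod (c * Rs R z one x)"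
    using abs_Im_le_cmod[of "c * Rs R z one x"] by linarith
  also have "cmod (c * Rs R z one x) \<le> Bp * (\<Sum>i. p (i + Suc R)) * L2_set (\<lambda>y. cmod (Rs R z one y)) (Q R x)"
  proof -
    have Bp0: "Bp \<ge> 0" using B[rule_format, of x] norm_ge_zero[of "\<phi> x"] by linarith
    have T0: "(\<Sum>i. p (i + Suc R)) \<ge> 0"
      by (rule suminf_nonneg[OF summable_ignore_initial_segment[OF psum]]) (use pnn in auto)
    show ?thesis unfolding norm_mult by (rule mult_mono[OF cb gx]) (use Bp0 T0 in auto)
  qed
  finally show ?thesis by simp
qed


lemma record_low: "\<exists>R\<ge>m. \<forall>s\<ge>R. u R \<le> u s"
proof -
  have lim: "(\<lambda>r. 1 / u (Suc r)) \<longlonglongrightarrow> 0" by (rule summable_LIMSEQ_zero[OF su])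
  have um: "1 / u m > 0" using upos by simp
  obtain S where S: "\<forall>s\<ge>S. norm (1 / u (Suc s) - 0) < 1 / u m" using LIMSEQ_D[OF lim um] by blast
  have big: "u (Suc s) > u m" if "s \<ge> S" for s
  proof -
    have "1 / u (Suc s) < 1 / u m" using S that upos by (simp add: abs_of_pos)
    show ?thesis
    proof (rule ccontr)
      assume "\<not> u m < u (Suc s)"
      then have "u (Suc s) \<le> u m" by simp
      then have "1 / u m \<le> 1 / u (Suc s)" using upos by (intro divide_left_mono) (auto intro: mult_pos_pos)
      then show False using \<open>1 / u (Suc s) < 1 / u m\<close> by simp
    qed
  qed
  define S' where "S' = max m (Suc S)"
  have fin: "finite (u ` {m..S'})" and ne: "u ` {m..S'} \<noteq> {}" unfolding S'_def by auto
  obtain R where R: "R \<in> {m..S'}" "u R = Min (u ` {m..S'})" using Min_in[OF fin ne] by auto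
  have Rmin: "u R \<le> u s" if "s \<in> {m..S'}" for s using R(2) Min_le[OF fin] that by simp
  have "\<forall>s\<ge>R. u R \<le> u s"
  proof (intro allI impI)
    fix s assume "R \<le> s"
    show "u R \<le> u s"
    proof (cases "s \<le> S'")
      case True then show ?thesis using Rmin \<open>R \<le> s\<close> R(1) by auto
    next
      case False
      then obtain s' where s': "s = Suc s'" "s' \<ge> S" unfolding S'_def by (cases s) auto
      have "u m \<le> u s" using big[OF s'(2)] s'(1) by simp
      moreover have "u R \<le> u m" using Rmin[of m] unfolding S'_def by simp
      ultimately show ?thesis by simp
    qed
  qed
  then show ?thesis using R(1) by auto
qed

lemma ev_u1: "\<exists>R1. \<forall>r\<ge>R1. u r \<ge> 1"
proof -
  have lim: "(\<lambda>r. 1 / u (Suc r)) \<longlonglongrightarrow> 0" by (rule summable_LIMSEQ_zero[OF su])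
  obtain S where S: "\<forall>s\<ge>S. norm (1 / u (Suc s) - 0) < 1" using LIMSEQ_D[OF lim, of 1] by auto
  have "u r \<ge> 1" if "r \<ge> Suc S" for r
  proof -
    define s where "s = r - 1"
    have s: "r = Suc s" "s \<ge> S" using that unfolding s_def by auto
    have "1 / u r < 1" using S s upos by (simp add: abs_of_pos)
    then show ?thesis using upos[rule_format, of r] by (simp add: divide_less_eq)
  qed
  then show ?thesis by blast
qed

lemma final_e:
  assumes good: "\<forall>R\<ge>R0. e \<notin> Bad R \<and> u R \<ge> 1" and eps: "\<epsilon> > 0"
    and eqH: "\<forall>y. Hop P n p \<omega> \<phi> y - Complex e \<epsilon> * \<phi> y = (if y = x then 1 else 0)"
    and B: "\<forall>y. cmod (\<phi> y) \<le> Bp"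
  shows "Im (\<phi> x) \<le> \<epsilon> * (sqrt (F R0 e) * exp (suminf ap))^2"
proof -
  define z where "z = Complex e \<epsilon>"
  define M where "M = sqrt (F R0 e) * exp (suminf ap)"
  have z: "Im z \<noteq> 0" "Re z = e" "Im z = \<epsilon>" unfolding z_def using eps by auto
  have Bp0: "Bp \<ge> 0" using B[rule_format, of x] norm_ge_zero[of "\<phi> x"] by linarith
  have F0: "F R0 e \<ge> 0" unfolding F_def by (intro sum_nonneg) simp
  have LM: "L R z \<le> M" if "R \<ge> R0" for R
  proof -
    have "L R z \<le> sqrt (F R0 e) * exp (\<Sum>r\<in>{R0..<R}. ap r)" by (rule Lbound[OF good z(1,2) that])
    also have "\<dots> \<le> M" unfolding M_def
      using sum_le_suminf[OF ap_sum, of "{R0..<R}"] ap_nn F0 by (intro mult_left_mono) auto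
    finally show ?thesis .
  qed
  have main: "Im (\<phi> x) \<le> \<epsilon> * M^2 + Bp * (\<Sum>i. ap (i + R))" if R: "R \<ge> R0" and low: "\<forall>s\<ge>R. u R \<le> u s" for R
  proof -
    have eR: "e \<notin> Bad R" using good R by auto
    let ?T = "\<Sum>i. p (i + Suc R)"
    let ?g = "L2_set (\<lambda>y. cmod (Rs R z one y)) (Q R x)"
    have T0: "?T \<ge> 0" by (rule suminf_nonneg[OF summable_ignore_initial_segment[OF psum]]) (use pnn in auto)
    have "Im (\<phi> x) \<le> Im z * (L R z)^2 + Bp * ?T * ?g" using Im_phi_bound[OF z(1) _ B] eqH unfolding z_def by blast
    also have "Im z * (L R z)^2 \<le> \<epsilon> * M^2"
      unfolding z(3) using LM[OF R] L_nn[of R z] eps by (intro mult_left_mono power_mono) auto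
    also have "Bp * ?T * ?g \<le> Bp * ?T * tt R"
      using g_bound[OF eR z(2)] Bp0 T0 by (intro mult_left_mono) auto
    also have "?T * tt R \<le> (\<Sum>i. ap (i + R))"
    proof -
      have s1: "summable (\<lambda>i. p (i + Suc R))" by (rule summable_ignore_initial_segment[OF psum])
      have "?T * tt R = (\<Sum>i. p (i + Suc R) * tt R)" by (rule suminf_mult2[OF s1])
      also have "\<dots> \<le> (\<Sum>i. ap (i + R))"
      proof (rule suminf_le)
        fix i
        have N: "real (NN n R) \<le> real (NN n (i + R))" using NN_mono[of R "i + R"] by simp
        have uR: "u R \<le> u (i + R)" using low by simp
        have u1: "1 \<le> u (Suc (i + R))" using good R by simp
        have "p (i + Suc R) * tt R = p (Suc (i + R)) * (real (NN n R) * u R)" unfolding tt_def by simp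
        also have "\<dots> \<le> p (Suc (i + R)) * (real (NN n (i + R)) * u (i + R))"
          using N uR pnn upos by (intro mult_left_mono mult_mono) (auto simp: less_imp_le)
        also have "\<dots> \<le> p (Suc (i + R)) * (real (NN n (i + R)) * u (i + R)) * u (Suc (i + R))"
        proof -
          have X0: "p (Suc (i + R)) * (real (NN n (i + R)) * u (i + R)) \<ge> 0"
            using pnn upos by (intro mult_nonneg_nonneg) (auto simp: less_imp_le)
          show ?thesis using mult_left_mono[OF u1 X0] by simp
        qed
        also have "\<dots> = ap (i + R)" unfolding ap_def by (simp add: mult.assoc)
        finally show "p (i + Suc R) * tt R \<le> ap (i + R)" .
      next
        show "summable (\<lambda>i. p (i + Suc R) * tt R)" by (rule summable_mult2[OF s1])
        show "summable (\<lambda>i. ap (i + R))" by (rule summable_ignore_initial_segment[OF ap_sum])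
      qed
      finally show ?thesis .
    qed
    then have "Bp * ?T * tt R \<le> Bp * (\<Sum>i. ap (i + R))"
      using Bp0 by (simp add: mult.assoc mult_left_mono)
    finally show ?thesis by simp
  qed
  have tail: "(\<lambda>R. \<Sum>i. ap (i + R)) \<longlonglongrightarrow> 0" by (rule suminf_exist_split2[OF ap_sum])
  show ?thesis
  proof (rule ccontr)
    assume "\<not> ?thesis"
    then have d: "Im (\<phi> x) - \<epsilon> * M^2 > 0" unfolding M_def by simp
    define \<delta> where "\<delta> = (Im (\<phi> x) - \<epsilon> * M^2) / (Bp + 1)"
    have \<delta>: "\<delta> > 0" unfolding \<delta>_def using d Bp0 by simp
    obtain m where m: "\<forall>R\<ge>m. norm ((\<Sum>i. ap (i + R)) - 0) < \<delta>" using LIMSEQ_D[OF tail \<delta>] by blast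
    obtain R where R: "R \<ge> max m R0" "\<forall>s\<ge>R. u R \<le> u s" using record_low[of "max m R0"] by blast
    have t0: "(\<Sum>i. ap (i + R)) \<ge> 0" by (rule suminf_nonneg[OF summable_ignore_initial_segment[OF ap_sum]]) (use ap_nn in auto)
    have tl: "(\<Sum>i. ap (i + R)) < \<delta>" using m R(1) t0 by auto
    have "Im (\<phi> x) \<le> \<epsilon> * M^2 + Bp * (\<Sum>i. ap (i + R))" using main[of R] R by auto
    also have "Bp * (\<Sum>i. ap (i + R)) \<le> Bp * \<delta>" using tl Bp0 by (intro mult_left_mono) auto
    also have "Bp * \<delta> < (Bp + 1) * \<delta>" using \<delta> by simp
    also have "(Bp + 1) * \<delta> = Im (\<phi> x) - \<epsilon> * M^2" unfolding \<delta>_def using Bp0 by simp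
    finally show False by simp
  qed
qed

lemma AE_good: "AE e in lborel. \<exists>R0. \<forall>R\<ge>R0. e \<notin> Bad R \<and> u R \<ge> 1"
proof -
  have mb: "measure lborel (Bad R) \<le> 4 / u R" for R
    unfolding measure_def by (rule enn2real_leI[OF _ Bad_meas]) (use upos in \<open>simp add: less_imp_le\<close>)
  have su0: "summable (\<lambda>R. 1 / u R)"
    using summable_Suc_iff[of "\<lambda>R. 1 / u R"] su by simp
  have "AE e in lborel. eventually (\<lambda>R. e \<in> space lborel - Bad R) sequentially"
  proof (rule borel_cantelli_AE1)
    show "Bad R \<in> sets lborel" for R by (rule Bad_sets)
    show "emeasure lborel (Bad R) < \<infinity>" for R using Bad_meas[of R] by (simp add: le_less_trans)
    show "summable (\<lambda>R. measure lborel (Bad R))"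
    proof (rule summable_comparison_test)
      show "\<exists>N. \<forall>R\<ge>N. norm (measure lborel (Bad R)) \<le> 4 * (1 / u R)" using mb by simp
      show "summable (\<lambda>R. 4 * (1 / u R))" by (rule summable_mult[OF su0])
    qed
  qed
  then show ?thesis
  proof (rule eventually_mono)
    fix e assume "eventually (\<lambda>R. e \<in> space lborel - Bad R) sequentially"
    then obtain R2 where R2: "\<forall>R\<ge>R2. e \<notin> Bad R" unfolding eventually_sequentially by auto
    obtain R1 where R1: "\<forall>r\<ge>R1. u r \<ge> 1" using ev_u1 by blast
    show "\<exists>R0. \<forall>R\<ge>R0. e \<notin> Bad R \<and> u R \<ge> 1"
      using R1 R2 by (intro exI[of _ "max R1 R2"]) auto
  qed
qed

end


context mctx
begin

theorem main_in:
  assumes sm: "spectral_measure P n p \<omega> x \<mu>"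
  shows "AE e in lborel. (\<integral>\<^sup>+ l. (if l = e then \<infinity> else ennreal (1 / (e - l)\<^sup>2)) \<partial>\<mu>) < \<infinity>"
proof -
  obtain Kf lamf vf where sd: "\<forall>R. sdata (Q R x) (aK P n p \<omega> R) (Kf R) (lamf R) (vf R)"
    using sd_ex by blast
  interpret m2: mctx2 P n p u \<omega> x Kf lamf vf
  proof (rule mctx2.intro)
    show "mctx P n p u" by unfold_locales (use wok upos su sa hs in auto)
  qed (unfold mctx2_axioms_def, use sd in blast)
  have ps: "prob_space \<mu>" and se: "sets \<mu> = sets borel"
    using sm unfolding spectral_measure_def by auto
  show ?thesis
    using m2.AE_good
  proof (rule eventually_mono)
    fix e assume "\<exists>R0. \<forall>R\<ge>R0. e \<notin> m2.Bad R \<and> u R \<ge> 1"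
    then obtain R0 where good: "\<forall>R\<ge>R0. e \<notin> m2.Bad R \<and> u R \<ge> 1" by blast
    show "(\<integral>\<^sup>+ l. (if l = e then \<infinity> else ennreal (1 / (e - l)\<^sup>2)) \<partial>\<mu>) < \<infinity>"
    proof (rule meas_final[OF ps se])
      fix k :: nat
      let ?z = "Complex e (1 / real (Suc k))"
      have "Im ?z \<noteq> 0" by simp
      then obtain \<phi> where Hd: "Hdom \<omega> \<phi>"
        and eq: "\<forall>y. Hop P n p \<omega> \<phi> y - ?z * \<phi> y = (if y = x then 1 else 0)"
        and phix: "\<phi> x = (\<integral>l. 1 / (complex_of_real l - ?z) \<partial>\<mu>)"
        using sm unfolding spectral_measure_def by blast
      obtain Bp where B: "\<forall>y. cmod (\<phi> y) \<le> Bp"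
        using m2.phi_bound_aux Hd unfolding Hdom_def by blast
      have "Im (\<phi> x) \<le> (1 / real (Suc k)) * (sqrt (m2.F R0 e) * exp (suminf m2.ap))^2"
        by (rule m2.final_e[OF good _ eq B]) simp
      then show "Im (\<integral>l. 1 / (complex_of_real l - ?z) \<partial>\<mu>) \<le> (1 / real (Suc k)) * (sqrt (m2.F R0 e) * exp (suminf m2.ap))^2"
        using phix by simp
    qed
  qed
qed

end

theorem mainTheorem7:
  fixes P :: "nat \<Rightarrow> ('x::countable) set set" and n :: "nat \<Rightarrow> nat"
    and p u :: "nat \<Rightarrow> real" and \<omega> :: "'x \<Rightarrow> real" and x :: 'x and \<mu> :: "real measure"
  assumes "hierarchical_structure P n"
    and "weights_ok p"
    and "\<forall>r. u r > 0"
    and "summable (\<lambda>r. 1 / u (Suc r))"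
    and "summable (\<lambda>r. p (Suc r) * real (NN n r) * u r * u (Suc r))"
    and "spectral_measure P n p \<omega> x \<mu>"
  shows "AE e in lborel.
           (\<integral>\<^sup>+ l. (if l = e then \<infinity> else ennreal (1 / (e - l)\<^sup>2)) \<partial>\<mu>) < \<infinity>"
proof -
  interpret mctx P n p u \<omega> x
    by unfold_locales (use assms in auto)
  show ?thesis by (rule main_in[OF assms(6)])
qed


end
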